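(* Let $r\in\mathcal{Y}_n$. In $\mathit{LR}$ (the graded dual of $\mathcal{Y}Sym$, with basis $M^*_t$ dual to $M_t$), $$\Delta(M^*_r)=\sum_{\substack{\mathsf{R}\subseteq[n]\\ \lambda(\pi_{\mathsf{R}})\le r}}M^*_{r|_{\mathsf{R}}}\otimes M^*_{r|_{\mathsf{R}^c}}.$$
   Context: Permutations in one-line notation, products are compositions; $\mathrm{st}(a_1,..,a_p)$ is the permutation with the same relative order as distinct integers $a_i$. For $\sigma\in\mathfrak{S}_p,\tau\in\mathfrak{S}_q$: $\sigma\vee\tau=(\sigma(1)+q,..,\sigma(p)+q,p+q+1,\tau(1),..,\tau(q))$, $\sigma/\tau=(\sigma(1),..,\sigma(p),\tau(1)+p,..,\tau(q)+p)$. For $\mathsf{R}=\{R_1<\dots<R_p\}\subseteq[n]$ with complement $\mathsf{R}^c=\{R^c_1<\dots<R^c_q\}$, $\pi_{\mathsf{R}}\in\mathfrak{S}_n$ is defined by $\pi_{\mathsf{R}}^{-1}=(R_1,\dots,R_p,R^c_1,\dots,R^c_q)$ in one-line notation. For $\rho\in\mathfrak{S}_n$, $\rho|_{\mathsf{R}}=\mathrm{st}(\rho(R_1),\dots,\rho(R_p))$, and for $r\in\mathcal{Y}_n$, $r|_{\mathsf{R}}=\lambda(\gamma(r)|_{\mathsf{R}})$. Trees: $\mathcal{Y}_n$ = rooted planar binary trees with $n$ internal nodes, $\mathcal{Y}_0=\{|\}$; $s\vee t$ = root with left subtree $s$ and right subtree $t$. Tamari order: generated by replacing a subtree $(a\vee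 b)\vee c$ by the larger $a\vee(b\vee c)$. $\lambda(\mathrm{id}_0)=|$, $\lambda(\sigma)=\lambda(\mathrm{st}(\sigma(1..j-1)))\vee\lambda(\mathrm{st}(\sigma(j+1..n)))$ where $j=\sigma^{-1}(n)$; $\gamma(|)=\mathrm{id}_0$, $\gamma(t)=\gamma(t_l)\vee\gamma(t_r)$. $\mathcal{Y}Sym$: graded connected Hopf algebra over $\mathbb{Q}$ with basis $F_t$. Leaves of $t\in\mathcal{Y}_p$ numbered $0..p$; splitting at leaf $i$: $|\to(|,|)$; $t=t_l\vee t_r\to(a,b\vee t_r)$ if leaf $i$ in $t_l$ and $t_l\to(a,b)$, $\to(t_l\vee c,d)$ if in $t_r$ and $t_r\to(c,d)$. $\Delta(F_t)=\sum_iF_{t_0}\otimes F_{t_1}$. For $s\in\mathcal{Y}_q$, $F_t\cdot F_s=\sum F_{(t_0,..,t_q)/s}$ over multisets $i_1\le\dots\le i_q$ of leaves of $t$, where $t\to(t_0,..,t_q)$ splits $t$ at $i_q$ into $(t',t_q)$ and divides $t'$ at $i_1..i_{q-1}$, and $(t_0,..,t_q)/s$ grafts the root of $t_i$ onto leaf $i$ of $s$. $M_t=\sum_{t\le s}\mu_{\mathcal{Y}_n}(t,s)F_s$. The coproduct of $\mathit{LR}$ is dual to the product of $\mathcal{Y}Sym$. *)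

theory Defs
  imports Complex_Main
begin

datatype tree = Leaf | Node tree tree

fun nodes :: "tree \<Rightarrow> nat" where
  "nodes Leaf = 0"
| "nodes (Node l r) = Suc (nodes l + nodes r)"

definition Ytrees :: "nat \<Rightarrow> tree set" where
  "Ytrees n = {t. nodes t = n}"

inductive tamari_step :: "tree \<Rightarrow> tree \<Rightarrow> bool" where
  rot: "tamari_step (Node (Node a b) c) (Node a (Node b c))"
| left: "tamari_step l l' \<Longrightarrow> tamari_step (Node l r) (Node l' r)"
| right: "tamari_step r r' \<Longrightarrow> tamari_step (Node l r) (Node l r')"

definition tamari_le :: "tree \<Rightarrow> tree \<Rightarrow> bool" where
  "tamari_le = tamari_step\<^sup>*\<^sup>*"

definition tamari_mobius :: "tree \<Rightarrow> tree \<Rightarrow> int" where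
  "tamari_mobius = (THE mu.
      (\<forall>t s. \<not> tamari_le t s \<longrightarrow> mu t s = 0) \<and>
      (\<forall>t s. tamari_le t s \<longrightarrow>
          (\<Sum>u\<in>{u. tamari_le t u \<and> tamari_le u s}. mu t u) = (if t = s then 1 else 0)))"

text \<open>Splitting a tree at leaf i (leaves numbered 0..nodes t from left to right).\<close>
fun split_at :: "tree \<Rightarrow> nat \<Rightarrow> tree \<times> tree" where
  "split_at Leaf i = (Leaf, Leaf)"
| "split_at (Node l r) i =
     (if i \<le> nodes l then (let (a, b) = split_at l i in (a, Node b r))
      else (let (c, d) = split_at r (i - nodes l - 1) in (Node l c, d)))"

text \<open>Dividing t at i_1 <= ... <= i_q (list given in reverse order): split at the last
  index i_q into (t', t_q) and divide t' at the remaining ones.\<close>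
fun divide_rev :: "tree \<Rightarrow> nat list \<Rightarrow> tree list" where
  "divide_rev t [] = [t]"
| "divide_rev t (i # js) = (let (t', tq) = split_at t i in divide_rev t' js @ [tq])"

definition divide :: "tree \<Rightarrow> nat list \<Rightarrow> tree list" where
  "divide t is = divide_rev t (rev is)"

text \<open>Grafting: (t_0,...,t_q)/s grafts the root of t_i onto leaf i of s.\<close>
fun graft :: "tree \<Rightarrow> tree list \<Rightarrow> tree" where
  "graft Leaf ts = hd ts"
| "graft (Node l r) ts = Node (graft l (take (Suc (nodes l)) ts)) (graft r (drop (Suc (nodes l)) ts))"

text \<open>Elements of YSym are represented by their coordinate function in the F basis
  (\<open>x u\<close> = coefficient of F_u).  Coefficient of F_u in F_t * F_s: the number of
  multisets i_1 <= ... <= i_q of leaves of t (q = nodes s) with (t_0,...,t_q)/s = u.\<close>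
definition prodF :: "tree \<Rightarrow> tree \<Rightarrow> tree \<Rightarrow> rat" where
  "prodF t s u = of_nat (card {is. length is = nodes s \<and> sorted is \<and> set is \<subseteq> {0..nodes t}
                                 \<and> graft s (divide t is) = u})"

text \<open>M_t = sum over t <= s of mu(t,s) F_s, as an F-coordinate function.\<close>
definition Mvec :: "tree \<Rightarrow> tree \<Rightarrow> rat" where
  "Mvec t u = of_int (tamari_mobius t u)"

definition prodM :: "tree \<Rightarrow> tree \<Rightarrow> tree \<Rightarrow> rat" where
  "prodM s t u = (\<Sum>s'\<in>Ytrees (nodes s). \<Sum>t'\<in>Ytrees (nodes t).
        Mvec s s' * Mvec t t' * prodF s' t' u)"

text \<open>Coefficient of M_r in an element x (the homogeneous component of degree nodes r
  of x expanded in the M basis of that component).  This is the pairing with M*_r.\<close>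
definition Mcoord :: "(tree \<Rightarrow> rat) \<Rightarrow> tree \<Rightarrow> rat" where
  "Mcoord x r = (THE c. (\<forall>v. v \<notin> Ytrees (nodes r) \<longrightarrow> c v = 0) \<and>
        (\<forall>u\<in>Ytrees (nodes r). x u = (\<Sum>v\<in>Ytrees (nodes r). c v * Mvec v u))) r"

text \<open>The coproduct of LR is dual to the product of YSym: the coefficient of
  M*_s \<otimes> M*_t in Delta(M*_r) is the coefficient of M_r in M_s * M_t.
  \<open>LR_coprod_M r\<close> is Delta(M*_r) as a coordinate function on pairs (s,t).\<close>
definition LR_coprod_M :: "tree \<Rightarrow> tree \<times> tree \<Rightarrow> rat" where
  "LR_coprod_M r = (\<lambda>(s, t). Mcoord (prodM s t) r)"

definition st :: "nat list \<Rightarrow> nat list" where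
  "st xs = map (\<lambda>x. card {y \<in> set xs. y \<le> x}) xs"

lemma length_st[simp]: "length (st xs) = length xs"
  by (simp add: st_def)

lemma takeWhile_shorter: "\<exists>y\<in>set xs. \<not> P y \<Longrightarrow> length (takeWhile P xs) < length xs"
  by (induction xs) auto

function lam :: "nat list \<Rightarrow> tree" where
  "lam [] = Leaf"
| "lam (x # xs) =
     Node (lam (st (takeWhile (\<lambda>y. y \<noteq> Max (set (x # xs))) (x # xs))))
          (lam (st (tl (dropWhile (\<lambda>y. y \<noteq> Max (set (x # xs))) (x # xs)))))"
  by pat_completeness auto
termination
proof (relation "measure length")
  fix x :: nat and xs :: "nat list"
  let ?P = "\<lambda>y. y \<noteq> Max (set (x # xs))"
  have "Max (set (x # xs)) \<in> set (x # xs)" using Max_in[of "set (x # xs)"] by simp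
  then have "\<not> (\<forall>y\<in>set (x # xs). ?P y)" by blast
  then have "length (takeWhile ?P (x # xs)) < length (x # xs)"
    by (intro takeWhile_shorter) blast
  then show "(st (takeWhile ?P (x # xs)), x # xs) \<in> measure length" by simp
  have "length (tl (dropWhile ?P (x # xs))) < length (x # xs)"
    using length_dropWhile_le[of ?P "x # xs"] by simp
  then show "(st (tl (dropWhile ?P (x # xs))), x # xs) \<in> measure length" by simp
qed auto

definition perm_vee :: "nat list \<Rightarrow> nat list \<Rightarrow> nat list" where
  "perm_vee \<sigma> \<tau> = map (\<lambda>x. x + length \<tau>) \<sigma> @ [length \<sigma> + length \<tau> + 1] @ \<tau>"

fun gam :: "tree \<Rightarrow> nat list" where
  "gam Leaf = []"
| "gam (Node l r) = perm_vee (gam l) (gam r)"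

definition perm_inv :: "nat list \<Rightarrow> nat list" where
  "perm_inv w = map (\<lambda>k. Suc (LEAST i. i < length w \<and> w ! i = k)) [1..<Suc (length w)]"

definition piR :: "nat \<Rightarrow> nat set \<Rightarrow> nat list" where
  "piR n R = perm_inv (sorted_list_of_set R @ sorted_list_of_set ({1..n} - R))"

definition perm_restr :: "nat list \<Rightarrow> nat set \<Rightarrow> nat list" where
  "perm_restr \<rho> R = st (map (\<lambda>i. \<rho> ! (i - 1)) (sorted_list_of_set R))"

definition tree_restr :: "tree \<Rightarrow> nat set \<Rightarrow> tree" where
  "tree_restr r R = lam (perm_restr (gam r) R)"

end

theory Submission
  imports Defs
begin


definition shiftR :: "nat \<Rightarrow> (nat \<times> nat) set \<Rightarrow> (nat \<times> nat) set" where
  "shiftR k S = (\<lambda>(i,j). (i+k, j+k)) ` S"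

lemma mem_shiftR: "(a,b) \<in> shiftR k S \<longleftrightarrow> k \<le> a \<and> k \<le> b \<and> (a-k, b-k) \<in> S"
  unfolding shiftR_def by force

fun Aset :: "tree \<Rightarrow> (nat \<times> nat) set" where
  "Aset Leaf = {}"
| "Aset (Node l r) = Aset l \<union> {(i, nodes l) | i. i < nodes l} \<union> shiftR (Suc (nodes l)) (Aset r)"

lemma mem_Aset_Node: "(i,j) \<in> Aset (Node l r) \<longleftrightarrow>
   (i,j) \<in> Aset l \<or> (i < nodes l \<and> j = nodes l) \<or>
   (Suc (nodes l) \<le> i \<and> Suc (nodes l) \<le> j \<and> (i - Suc (nodes l), j - Suc (nodes l)) \<in> Aset r)"
  by (auto simp: mem_shiftR)

declare Aset.simps(2)[simp del]

lemma Aset_bound: "(i,j) \<in> Aset x \<Longrightarrow> i < j \<and> j < nodes x"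
  by (induction x arbitrary: i j) (auto simp: mem_Aset_Node, fastforce+)

lemma Aset_b1: "(i,j) \<in> Aset x \<Longrightarrow> i < j" using Aset_bound by blast
lemma Aset_b2: "(i,j) \<in> Aset x \<Longrightarrow> j < nodes x" using Aset_bound by blast

lemma Aset_closed: "(i,j) \<in> Aset x \<Longrightarrow> i \<le> k \<Longrightarrow> k < j \<Longrightarrow> (k,j) \<in> Aset x"
proof (induction x arbitrary: i j k)
  case Leaf then show ?case by simp
next
  case (Node l r)
  show ?case using Node.prems Node.IH(1)[of i j k] Node.IH(2)[of "i - Suc (nodes l)" "j - Suc (nodes l)" "k - Suc (nodes l)"]
    Aset_bound[of i j l]
    by (auto simp: mem_Aset_Node)
qed

lemma nodes_split: "i \<le> nodes s \<Longrightarrow> nodes (fst (split_at s i)) = i \<and> nodes (snd (split_at s i)) = nodes s - i"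
  by (induction s arbitrary: i) (auto simp: split_beta)

lemma Aset_split_fst: "i \<le> nodes s \<Longrightarrow> (a,b) \<in> Aset (fst (split_at s i)) \<longleftrightarrow> (a,b) \<in> Aset s \<and> b < i"
proof (induction s arbitrary: i a b)
  case Leaf then show ?case by simp
next
  case (Node l r)
  show ?case
  proof (cases "i \<le> nodes l")
    case True
    have "(a,b) \<in> Aset l \<Longrightarrow> b < nodes l" by (rule Aset_b2)
    then show ?thesis using True Node.IH(1)[of i] 
      by (auto simp: mem_Aset_Node split_beta)
  next
    case False
    have n: "nodes (fst (split_at r (i - nodes l - 1))) = i - nodes l - 1"
      using nodes_split[of "i - nodes l - 1" r] False Node.prems by auto
    have "(a,b) \<in> Aset l \<Longrightarrow> b < nodes l" by (rule Aset_b2)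
    then show ?thesis using False Node.prems Node.IH(2)[of "i - nodes l - 1"] n
      by (auto simp: mem_Aset_Node split_beta)
  qed
qed

lemma Aset_split_snd: "i \<le> nodes s \<Longrightarrow> (a,b) \<in> Aset (snd (split_at s i)) \<longleftrightarrow> (a+i, b+i) \<in> Aset s"
proof (induction s arbitrary: i a b)
  case Leaf then show ?case by simp
next
  case (Node l r)
  show ?case
  proof (cases "i \<le> nodes l")
    case True
    have n: "nodes (snd (split_at l i)) = nodes l - i"
      using nodes_split[of i l] True by auto
    have "(a+i,b+i) \<in> Aset l \<Longrightarrow> b + i < nodes l" by (rule Aset_b2)
    then show ?thesis using True Node.IH(1)[of i] n
      by (auto simp: mem_Aset_Node split_beta)
  next
    case False
    have "(a+i,b+i) \<in> Aset l \<Longrightarrow> b + i < nodes l" by (rule Aset_b2)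
    then show ?thesis using False Node.prems Node.IH(2)[of "i - nodes l - 1"] 
      by (auto simp: mem_Aset_Node split_beta)
  qed
qed

lemma split_at_0: "split_at s 0 = (Leaf, s)"
  by (induction s) auto

lemma split_at_nodes: "split_at s (nodes s) = (s, Leaf)"
  by (induction s) (auto simp: split_at_0)

lemma tamari_step_Aset: "tamari_step x y \<Longrightarrow> nodes y = nodes x \<and> Aset y \<subset> Aset x"
proof (induction rule: tamari_step.induct)
  case (rot a b c)
  have sub: "Aset (Node a (Node b c)) \<subseteq> Aset (Node (Node a b) c)"
  proof
    fix p assume "p \<in> Aset (Node a (Node b c))"
    then obtain i j where p: "p = (i,j)" and "(i,j) \<in> Aset (Node a (Node b c))" by (cases p) auto
    then show "p \<in> Aset (Node (Node a b) c)"
      by (auto simp: mem_Aset_Node dest: Aset_b1)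
  qed
  have "(nodes a, Suc (nodes a + nodes b)) \<in> Aset (Node (Node a b) c)"
    by (auto simp: mem_Aset_Node)
  moreover have "(nodes a, Suc (nodes a + nodes b)) \<notin> Aset (Node a (Node b c))"
    by (auto simp: mem_Aset_Node dest: Aset_b2)
  ultimately show ?case using sub by auto
next
  case (left l l' r)
  moreover have "(Aset l \<union> Aset l') \<inter> ({(i, nodes l) |i. i < nodes l} \<union> shiftR (Suc (nodes l)) (Aset r)) = {}"
    using left by (auto simp: mem_shiftR dest: Aset_b2)
  ultimately show ?case by (auto simp: Aset.simps(2))
next
  case (right r r' l)
  then obtain a b where ab: "(a,b) \<in> Aset r" "(a,b) \<notin> Aset r'" by auto
  let ?k = "Suc (nodes l)"
  have "(a + ?k, b + ?k) \<in> Aset (Node l r)" using ab by (auto simp: mem_Aset_Node)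
  moreover have "(a + ?k, b + ?k) \<notin> Aset (Node l r')" using ab by (auto simp: mem_Aset_Node dest: Aset_b2)
  moreover have "Aset (Node l r') \<subseteq> Aset (Node l r)" using right by (auto simp: Aset.simps(2) shiftR_def)
  ultimately show ?case using right by auto
qed

lemma tamari_le_Aset: "tamari_le x y \<Longrightarrow> nodes y = nodes x \<and> (x = y \<or> Aset y \<subset> Aset x)"
  unfolding tamari_le_def
proof (induction rule: rtranclp_induct)
  case base then show ?case by simp
next
  case (step y z)
  then show ?case using tamari_step_Aset[OF step(2)] by auto
qed

lemma tamari_le_refl[simp]: "tamari_le x x"
  by (simp add: tamari_le_def)

lemma tamari_le_trans: "tamari_le x y \<Longrightarrow> tamari_le y z \<Longrightarrow> tamari_le x z"
  unfolding tamari_le_def by simp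

lemma tamari_le_antisym: "tamari_le x y \<Longrightarrow> tamari_le y x \<Longrightarrow> x = y"
  using tamari_le_Aset by blast

lemma tamari_le_nodes: "tamari_le x y \<Longrightarrow> nodes y = nodes x"
  using tamari_le_Aset by blast

lemma tamari_le_left: "tamari_le l l' \<Longrightarrow> tamari_le (Node l r) (Node l' r)"
  unfolding tamari_le_def
proof (induction rule: rtranclp_induct)
  case base then show ?case by simp
next
  case (step y z) then show ?case by (meson rtranclp.simps tamari_step.left)
qed

lemma tamari_le_right: "tamari_le r r' \<Longrightarrow> tamari_le (Node l r) (Node l r')"
  unfolding tamari_le_def
proof (induction rule: rtranclp_induct)
  case base then show ?case by simp
next
  case (step y z) then show ?case by (meson rtranclp.simps tamari_step.right)
qed

lemma tamari_le_rot: "tamari_le (Node (Node a b) c) (Node a (Node b c))"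
  unfolding tamari_le_def using tamari_step.rot by blast

lemma tamari_Z: "k < nodes x \<Longrightarrow> (\<forall>i<k. (i,k) \<in> Aset x) \<Longrightarrow>
   tamari_le x (Node (fst (split_at x k)) (snd (split_at x (Suc k))))"
proof (induction x arbitrary: k)
  case Leaf then show ?case by simp
next
  case (Node l r)
  consider "k = nodes l" | "k < nodes l" | "k > nodes l" by linarith
  then show ?case
  proof cases
    case 1
    then show ?thesis by (simp add: split_at_nodes split_at_0)
  next
    case 2
    have "\<forall>i<k. (i,k) \<in> Aset l" using Node.prems 2 by (auto simp: mem_Aset_Node)
    then have "tamari_le l (Node (fst (split_at l k)) (snd (split_at l (Suc k))))"
      using Node.IH(1) 2 by blast
    then have "tamari_le (Node l r) (Node (Node (fst (split_at l k)) (snd (split_at l (Suc k)))) r)"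
      by (rule tamari_le_left)
    then have "tamari_le (Node l r) (Node (fst (split_at l k)) (Node (snd (split_at l (Suc k))) r))"
      using tamari_le_rot tamari_le_trans by blast
    then show ?thesis using 2 by (simp add: split_beta)
  next
    case 3
    then have "(nodes l, k) \<in> Aset (Node l r)" using Node.prems by auto
    then show ?thesis using 3 by (auto simp: mem_Aset_Node dest: Aset_b2)
  qed
qed

lemma tamari_le_iff: "nodes x = nodes y \<Longrightarrow> tamari_le x y \<longleftrightarrow> Aset y \<subseteq> Aset x"
proof
  assume "nodes x = nodes y" "tamari_le x y" then show "Aset y \<subseteq> Aset x"
    using tamari_le_Aset by blast
next
  assume "nodes x = nodes y" "Aset y \<subseteq> Aset x"
  then show "tamari_le x y"
  proof (induction y arbitrary: x)
    case Leaf then show ?case by (cases x) auto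
  next
    case (Node l' r')
    let ?k = "nodes l'"
    have k: "?k < nodes x" using Node.prems by simp
    have "\<forall>i<?k. (i,?k) \<in> Aset x" using Node.prems by (auto simp: mem_Aset_Node)
    then have z: "tamari_le x (Node (fst (split_at x ?k)) (snd (split_at x (Suc ?k))))"
      using tamari_Z k by blast
    have n1: "nodes (fst (split_at x ?k)) = nodes l'" using nodes_split[of ?k x] k by simp
    have n2: "nodes (snd (split_at x (Suc ?k))) = nodes r'" using nodes_split[of "Suc ?k" x] k Node.prems by simp
    have s1: "Aset l' \<subseteq> Aset (fst (split_at x ?k))"
    proof
      fix p assume p: "p \<in> Aset l'"
      obtain a b where ab: "p = (a,b)" by (cases p)
      have "(a,b) \<in> Aset x" using Node.prems p ab by (auto simp: mem_Aset_Node)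
      moreover have "b < ?k" using p ab Aset_b2 by blast
      ultimately show "p \<in> Aset (fst (split_at x ?k))" using Aset_split_fst[of ?k x a b] k ab by simp
    qed
    have s2: "Aset r' \<subseteq> Aset (snd (split_at x (Suc ?k)))"
    proof
      fix p assume p: "p \<in> Aset r'"
      obtain a b where ab: "p = (a,b)" by (cases p)
      have "(a + Suc ?k, b + Suc ?k) \<in> Aset (Node l' r')" using p ab by (auto simp: mem_Aset_Node)
      then have "(a + Suc ?k, b + Suc ?k) \<in> Aset x" using Node.prems by auto
      then show "p \<in> Aset (snd (split_at x (Suc ?k)))" using Aset_split_snd[of "Suc ?k" x a b] k ab by simp
    qed
    have "tamari_le (fst (split_at x ?k)) l'" using Node.IH(1) n1 s1 by simp
    moreover have "tamari_le (snd (split_at x (Suc ?k))) r'" using Node.IH(2) n2 s2 by simp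
    ultimately have "tamari_le (Node (fst (split_at x ?k)) (snd (split_at x (Suc ?k)))) (Node l' r')"
      by (meson tamari_le_left tamari_le_right tamari_le_trans)
    then show ?case using z tamari_le_trans by blast
  qed
qed



definition NI :: "nat list \<Rightarrow> (nat \<times> nat) set" where
  "NI v = {(i,j). i < j \<and> j < length v \<and> v!i < v!j}"

definition Kc :: "(nat \<times> nat) set \<Rightarrow> nat \<Rightarrow> (nat \<times> nat) set" where
  "Kc N n = {(i,j). i < j \<and> j < n \<and> (\<forall>k. i \<le> k \<and> k < j \<longrightarrow> (k,j) \<in> N)}"

lemma Kc_bound: "(a,b) \<in> Kc N n \<Longrightarrow> a < b \<and> b < n"
  by (simp add: Kc_def)

lemma st_nth: "i < length xs \<Longrightarrow> st xs ! i = card {y \<in> set xs. y \<le> xs ! i}"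
  by (simp add: st_def)

lemma st_less: "i < length xs \<Longrightarrow> j < length xs \<Longrightarrow> (st xs ! i < st xs ! j \<longleftrightarrow> xs!i < xs!j)"
proof -
  assume ij: "i < length xs" "j < length xs"
  show ?thesis
  proof
    assume lt: "xs!i < xs!j"
    have m1: "xs!j \<in> {y \<in> set xs. y \<le> xs ! j}" using ij by auto
    have m2: "xs!j \<notin> {y \<in> set xs. y \<le> xs ! i}" using lt by auto
    have sub: "{y \<in> set xs. y \<le> xs ! i} \<subseteq> {y \<in> set xs. y \<le> xs ! j}" using lt by auto
    have "{y \<in> set xs. y \<le> xs ! i} \<subset> {y \<in> set xs. y \<le> xs ! j}" using m1 m2 sub by blast
    then show "st xs ! i < st xs ! j" using ij by (simp add: st_nth psubset_card_mono)
  next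
    assume "st xs ! i < st xs ! j"
    moreover have "\<not> xs!i < xs!j \<Longrightarrow> {y \<in> set xs. y \<le> xs ! j} \<subseteq> {y \<in> set xs. y \<le> xs ! i}" by auto
    then have "\<not> xs!i < xs!j \<Longrightarrow> st xs ! j \<le> st xs ! i" using ij by (simp add: st_nth card_mono)
    ultimately show "xs!i < xs!j" by linarith
  qed
qed

lemma distinct_st: "distinct xs \<Longrightarrow> distinct (st xs)"
proof -
  assume d: "distinct xs"
  show ?thesis unfolding distinct_conv_nth
  proof (intro allI impI)
    fix i j assume "i < length (st xs)" "j < length (st xs)" "i \<noteq> j"
    then have "xs!i \<noteq> xs!j" "i < length xs" "j < length xs" using d by (auto simp: nth_eq_iff_index_eq)
    then show "st xs ! i \<noteq> st xs ! j" using st_less by (metis linorder_neq_iff)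
  qed
qed

lemma NI_st[simp]: "NI (st xs) = NI xs"
  unfolding NI_def using st_less by auto

lemma lam_Cons_eq:
  assumes d: "distinct v" and j: "j < length v" and m: "v ! j = Max (set v)"
  shows "lam v = Node (lam (st (take j v))) (lam (st (drop (Suc j) v)))"
proof -
  obtain x xs where v: "v = x # xs" using j by (cases v) auto
  have tw: "takeWhile (\<lambda>y. y \<noteq> Max (set v)) v = take j v"
    by (rule takeWhile_eq_take_P_nth) (use d j m in \<open>auto simp: nth_eq_iff_index_eq\<close>, metis less_trans nat_neq_iff nth_eq_iff_index_eq)
  have dw: "dropWhile (\<lambda>y. y \<noteq> Max (set v)) v = drop j v"
    using tw j by (simp add: dropWhile_eq_drop[of _ v] min_def)
  have "tl (drop j v) = drop (Suc j) v" by (simp add: drop_Suc tl_drop)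
  then show ?thesis using tw dw v by simp
qed

lemma Max_index: "v \<noteq> [] \<Longrightarrow> \<exists>j < length v. v ! j = Max (set v)"
  by (metis List.finite_set Max_in in_set_conv_nth set_empty)

lemma lam_props: "distinct v \<Longrightarrow> nodes (lam v) = length v \<and> Aset (lam v) = Kc (NI v) (length v)"
proof (induction "length v" arbitrary: v rule: less_induct)
  case less
  show ?case
  proof (cases v)
    case Nil then show ?thesis by (simp add: Kc_def)
  next
    case (Cons x xs)
    then obtain j where j: "j < length v" and m: "v ! j = Max (set v)" using Max_index by blast
    have lv: "lam v = Node (lam (st (take j v))) (lam (st (drop (Suc j) v)))"
      using lam_Cons_eq[OF less.prems j m] .
    have big: "k < length v \<Longrightarrow> k \<noteq> j \<Longrightarrow> v ! k < v ! j" for k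
    proof -
      assume k: "k < length v" "k \<noteq> j"
      have "v ! k \<le> Max (set v)" using k by auto
      moreover have "v ! k \<noteq> v ! j" using k j less.prems by (simp add: nth_eq_iff_index_eq)
      ultimately show ?thesis using m by simp
    qed
    have d1: "distinct (st (take j v))" using less.prems by (simp add: distinct_st)
    have d2: "distinct (st (drop (Suc j) v))" using less.prems by (simp add: distinct_st)
    have IH1: "nodes (lam (st (take j v))) = j \<and> Aset (lam (st (take j v))) = Kc (NI (take j v)) j"
      using less.hyps[of "st (take j v)"] d1 j by simp
    have IH2: "nodes (lam (st (drop (Suc j) v))) = length v - Suc j \<and>
        Aset (lam (st (drop (Suc j) v))) = Kc (NI (drop (Suc j) v)) (length v - Suc j)"
      using less.hyps[of "st (drop (Suc j) v)"] d2 j by simp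
    have nodes: "nodes (lam v) = length v" using lv IH1 IH2 j by simp
    have A: "(a,b) \<in> Aset (lam v) \<longleftrightarrow> (a,b) \<in> Kc (NI v) (length v)" for a b
    proof -
      have "(a,b) \<in> Aset (lam v) \<longleftrightarrow>
         (a,b) \<in> Kc (NI (take j v)) j \<or> (a < j \<and> b = j) \<or>
         (Suc j \<le> a \<and> Suc j \<le> b \<and> (a - Suc j, b - Suc j) \<in> Kc (NI (drop (Suc j) v)) (length v - Suc j))"
        using lv IH1 IH2 by (simp add: mem_Aset_Node)
      also have "\<dots> \<longleftrightarrow> (a,b) \<in> Kc (NI v) (length v)"
      proof (cases "b < j")
        case True
        have e: "(k,b) \<in> NI (take j v) \<longleftrightarrow> (k,b) \<in> NI v" if "k < b" for k
          using True j that by (simp add: NI_def)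
        have "(a,b) \<in> Kc (NI (take j v)) j \<longleftrightarrow> (a,b) \<in> Kc (NI v) (length v)"
          unfolding Kc_def using True j e by auto
        then show ?thesis using True by simp
      next
        case False
        show ?thesis
        proof (cases "b = j")
          case True
          have "(a,b) \<notin> Kc (NI (take j v)) j" using True by (simp add: Kc_def)
          moreover have "(a,b) \<in> Kc (NI v) (length v) \<longleftrightarrow> a < j"
            using True j big unfolding Kc_def NI_def by auto
          ultimately show ?thesis using True by simp
        next
          case False
          then have bj: "j < b" using \<open>\<not> b < j\<close> by simp
          show ?thesis
          proof (cases "a \<le> j")
            case True
            have "(a,b) \<notin> Kc (NI v) (length v)"
            proof
              assume "(a,b) \<in> Kc (NI v) (length v)"
              then have "(j,b) \<in> NI v" using True bj unfolding Kc_def by auto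
              then show False using big[of b] bj by (auto simp: NI_def)
            qed
            then show ?thesis using True bj Kc_bound[of a b "NI (take j v)" j] by auto
          next
            case False
            then have aj: "j < a" by simp
            have "(a - Suc j, b - Suc j) \<in> Kc (NI (drop (Suc j) v)) (length v - Suc j) \<longleftrightarrow>
                  (a,b) \<in> Kc (NI v) (length v)"
            proof
              assume H: "(a - Suc j, b - Suc j) \<in> Kc (NI (drop (Suc j) v)) (length v - Suc j)"
              show "(a,b) \<in> Kc (NI v) (length v)" unfolding Kc_def
              proof (simp only: mem_Collect_eq case_prod_conv, intro conjI allI impI)
                show "a < b" "b < length v" using H aj bj by (auto simp: Kc_def)
                fix k assume "a \<le> k \<and> k < b"
                then have k: "a \<le> k" "k < b" by auto
                have "\<forall>k'. a - Suc j \<le> k' \<and> k' < b - Suc j \<longrightarrow> (k', b - Suc j) \<in> NI (drop (Suc j) v)"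
                  using H unfolding Kc_def by auto
                moreover have "a - Suc j \<le> k - Suc j" "k - Suc j < b - Suc j" using k aj bj by auto
                ultimately have "(k - Suc j, b - Suc j) \<in> NI (drop (Suc j) v)" by blast
                then show "(k,b) \<in> NI v" using k aj bj by (auto simp: NI_def)
              qed
            next
              assume H: "(a,b) \<in> Kc (NI v) (length v)"
              show "(a - Suc j, b - Suc j) \<in> Kc (NI (drop (Suc j) v)) (length v - Suc j)" unfolding Kc_def
              proof (simp only: mem_Collect_eq case_prod_conv, intro conjI allI impI)
                show "a - Suc j < b - Suc j" "b - Suc j < length v - Suc j" using H aj bj by (auto simp: Kc_def)
                fix k assume "a - Suc j \<le> k \<and> k < b - Suc j"
                then have k: "a - Suc j \<le> k" "k < b - Suc j" by auto
                have "\<forall>k'. a \<le> k' \<and> k' < b \<longrightarrow> (k', b) \<in> NI v" using H unfolding Kc_def by auto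
                moreover have "a \<le> k + Suc j" "k + Suc j < b" using k aj bj by auto
                ultimately have "(k + Suc j, b) \<in> NI v" by blast
                then show "(k, b - Suc j) \<in> NI (drop (Suc j) v)" using k aj bj by (auto simp: NI_def) (metis add_Suc_right add.commute)
              qed
            qed
            then show ?thesis using aj bj Kc_bound[of a b "NI (take j v)" j] by auto
          qed
        qed
      qed
      finally show ?thesis .
    qed
    have "Aset (lam v) = Kc (NI v) (length v)"
    proof (rule set_eqI)
      fix p show "p \<in> Aset (lam v) \<longleftrightarrow> p \<in> Kc (NI v) (length v)" using A[of "fst p" "snd p"] by simp
    qed
    then show ?thesis using nodes by simp
  qed
qed

lemma nth_vee:
  "k < length \<sigma> \<Longrightarrow> perm_vee \<sigma> \<tau> ! k = \<sigma> ! k + length \<tau>"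
  "perm_vee \<sigma> \<tau> ! length \<sigma> = length \<sigma> + length \<tau> + 1"
  "length \<sigma> < k \<Longrightarrow> perm_vee \<sigma> \<tau> ! k = \<tau> ! (k - Suc (length \<sigma>))"
  by (auto simp: perm_vee_def nth_append)

lemma length_vee[simp]: "length (perm_vee \<sigma> \<tau>) = length \<sigma> + length \<tau> + 1"
  by (simp add: perm_vee_def)

lemma gam_props: "length (gam x) = nodes x \<and> set (gam x) = {1..nodes x} \<and> distinct (gam x) \<and> NI (gam x) = Aset x"
proof (induction x)
  case Leaf then show ?case by (simp add: NI_def)
next
  case (Node l r)
  let ?s = "gam l" and ?t = "gam r" and ?p = "nodes l" and ?q = "nodes r"
  have ls: "length ?s = ?p" and lt: "length ?t = ?q" using Node.IH by auto
  have ss: "set ?s = {1..?p}" and st: "set ?t = {1..?q}" using Node.IH by auto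
  have ds: "distinct ?s" and dt: "distinct ?t" using Node.IH by auto
  have Ns: "NI ?s = Aset l" and Nt: "NI ?t = Aset r" using Node.IH by auto
  have g: "gam (Node l r) = perm_vee ?s ?t" by simp
  have len: "length (gam (Node l r)) = nodes (Node l r)" using ls lt by simp
  have "set (gam (Node l r)) = (\<lambda>x. x + ?q) ` {1..?p} \<union> {?p + ?q + 1} \<union> {1..?q}"
    using ls lt ss st by (auto simp: perm_vee_def)
  also have "\<dots> = {1..nodes (Node l r)}"
  proof -
    have "(\<lambda>x. x + ?q) ` {1..?p} = {?q+1..?q+?p}"
      by (simp add: image_add_atLeastAtMost' add.commute)
    then show ?thesis by auto
  qed
  finally have set: "set (gam (Node l r)) = {1..nodes (Node l r)}" .
  have dist: "distinct (gam (Node l r))"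
  proof -
    have "distinct (map (\<lambda>x. x + ?q) ?s)" using ds by (simp add: distinct_map inj_on_def)
    moreover have "?p + ?q + 1 \<notin> set (map (\<lambda>x. x + ?q) ?s)" using ss by auto
    moreover have "?p + ?q + 1 \<notin> set ?t" using st by auto
    moreover have "set (map (\<lambda>x. x + ?q) ?s) \<inter> set ?t = {}" using ss st by auto
    ultimately show ?thesis using dt ls lt by (simp add: perm_vee_def)
  qed
  have NIeq: "(i,j) \<in> NI (gam (Node l r)) \<longleftrightarrow> (i,j) \<in> Aset (Node l r)" for i j
  proof -
    have sb: "k < ?p \<Longrightarrow> 1 \<le> ?s ! k \<and> ?s ! k \<le> ?p" for k
      using ss ls by (metis atLeastAtMost_iff nth_mem)
    have tb: "k < ?q \<Longrightarrow> 1 \<le> ?t ! k \<and> ?t ! k \<le> ?q" for k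
      using st lt by (metis atLeastAtMost_iff nth_mem)
    have pv: "perm_vee ?s ?t ! ?p = ?p + ?q + 1" using nth_vee(2)[of ?s ?t] ls lt by simp
    consider "j < ?p" | "j = ?p" | "?p < j" by linarith
    then show ?thesis
    proof cases
      case 1
      then have "(i,j) \<in> NI (gam (Node l r)) \<longleftrightarrow> (i,j) \<in> NI ?s"
        using ls lt by (auto simp: NI_def nth_vee)
      then show ?thesis using 1 Ns by (auto simp: mem_Aset_Node)
    next
      case 2
      have "(i,j) \<in> NI (gam (Node l r)) \<longleftrightarrow> i < ?p"
      proof
        assume "(i,j) \<in> NI (gam (Node l r))" then show "i < ?p" using 2 by (simp add: NI_def)
      next
        assume ip: "i < ?p"
        have "perm_vee ?s ?t ! i = ?s ! i + ?q" using nth_vee(1)[of i ?s ?t] ip ls lt by simp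
        moreover have "?s ! i + ?q < ?p + ?q + 1" using sb[of i] ip by simp
        ultimately show "(i,j) \<in> NI (gam (Node l r))" using 2 ip pv ls lt unfolding NI_def by simp
      qed
      then show ?thesis using 2 by (auto simp: mem_Aset_Node dest: Aset_b2)
    next
      case 3
      show ?thesis
      proof (cases "?p < i")
        case True
        have e1: "perm_vee ?s ?t ! i = ?t ! (i - Suc ?p)" using nth_vee(3)[of ?s i ?t] True ls by simp
        have e2: "perm_vee ?s ?t ! j = ?t ! (j - Suc ?p)" using nth_vee(3)[of ?s j ?t] 3 ls by simp
        have "(i,j) \<in> NI (gam (Node l r)) \<longleftrightarrow> (i - Suc ?p, j - Suc ?p) \<in> NI ?t"
          unfolding NI_def using 3 True ls lt e1 e2 by auto
        moreover have "(i,j) \<notin> Aset l" using 3 Aset_b2[of i j l] by auto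
        ultimately show ?thesis using mem_Aset_Node[of i j l r] 3 True Nt by auto
      next
        case False
        have "(i,j) \<notin> NI (gam (Node l r))"
        proof
          assume H: "(i,j) \<in> NI (gam (Node l r))"
          then have jl: "j - Suc ?p < ?q" using ls lt 3 by (auto simp: NI_def)
          show False
          proof (cases "i = ?p")
            case True
            then show False using H 3 ls lt tb[OF jl] pv by (auto simp: NI_def nth_vee)
          next
            case False
            then have "i < ?p" using \<open>\<not> ?p < i\<close> by simp
            then show False using H 3 ls lt tb[OF jl] sb by (auto simp: NI_def nth_vee)
          qed
        qed
        moreover have "(i,j) \<notin> Aset l" using 3 Aset_b2[of i j l] by auto
        then have "(i,j) \<notin> Aset (Node l r)" using mem_Aset_Node[of i j l r] 3 False by auto
        ultimately show ?thesis by simp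
      qed
    qed
  qed
  have "NI (gam (Node l r)) = Aset (Node l r)"
  proof (rule set_eqI)
    fix p show "p \<in> NI (gam (Node l r)) \<longleftrightarrow> p \<in> Aset (Node l r)" using NIeq[of "fst p" "snd p"] by simp
  qed
  then show ?case using len set dist by simp
qed

lemma Kc_sub: "Kc N n \<subseteq> N"
  unfolding Kc_def by auto

lemma closed_Kc: "N \<subseteq> {(i,j). i < j \<and> j < n} \<Longrightarrow> (\<And>i j k. (i,j) \<in> N \<Longrightarrow> i \<le> k \<Longrightarrow> k < j \<Longrightarrow> (k,j) \<in> N)
   \<Longrightarrow> Kc N n = N"
  unfolding Kc_def by auto

lemma Aset_sub_Kc: "nodes r = n \<Longrightarrow> Aset r \<subseteq> Kc N n \<longleftrightarrow> Aset r \<subseteq> N"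
proof
  assume "Aset r \<subseteq> Kc N n" then show "Aset r \<subseteq> N" using Kc_sub by blast
next
  assume H: "nodes r = n" "Aset r \<subseteq> N"
  show "Aset r \<subseteq> Kc N n"
  proof
    fix p assume p: "p \<in> Aset r"
    obtain i j where ij: "p = (i,j)" by (cases p)
    have b: "i < j" "j < n" using Aset_bound[of i j r] p ij H by auto
    have "\<forall>k. i \<le> k \<and> k < j \<longrightarrow> (k,j) \<in> N" using Aset_closed[of i j r] p ij H by auto
    then show "p \<in> Kc N n" using b ij unfolding Kc_def by auto
  qed
qed

lemma lam_nodes: "distinct v \<Longrightarrow> nodes (lam v) = length v"
  using lam_props by blast

lemma tamari_lam_le: "distinct v \<Longrightarrow> length v = nodes r \<Longrightarrow> tamari_le (lam v) r \<longleftrightarrow> Aset r \<subseteq> NI v"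
  using tamari_le_iff[of "lam v" r] lam_props[of v] Aset_sub_Kc[of r "length v" "NI v"] by simp

lemma tamari_le_lam: "distinct v \<Longrightarrow> length v = nodes s \<Longrightarrow> tamari_le s (lam v) \<longleftrightarrow> Kc (NI v) (length v) \<subseteq> Aset s"
  using tamari_le_iff[of s "lam v"] lam_props[of v] by simp

lemma sorted_idx: "sorted_wrt (<) (xs::nat list) \<Longrightarrow> a < length xs \<Longrightarrow> card {y \<in> set xs. y < xs!a} = (a::nat)"
proof -
  assume s: "sorted_wrt (<) xs" and a: "a < length xs"
  have "{y \<in> set xs. y < xs!a} = set (take a xs)"
  proof
    show "{y \<in> set xs. y < xs!a} \<subseteq> set (take a xs)"
    proof
      fix y assume "y \<in> {y \<in> set xs. y < xs!a}"
      then obtain k where k: "k < length xs" "xs!k = y" "y < xs!a" by (auto simp: in_set_conv_nth)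
      have "k < a"
      proof (rule ccontr)
        assume "\<not> k < a"
        then have "a = k \<or> a < k" by auto
        then show False using sorted_wrt_nth_less[OF s, of a k] k by (cases "a = k") auto
      qed
      then show "y \<in> set (take a xs)" using k by (auto simp: in_set_conv_nth)
    qed
  next
    show "set (take a xs) \<subseteq> {y \<in> set xs. y < xs!a}"
    proof
      fix y assume "y \<in> set (take a xs)"
      then obtain k where k: "k < a" "xs!k = y" using a by (auto simp: in_set_conv_nth)
      then show "y \<in> {y \<in> set xs. y < xs!a}" using sorted_wrt_nth_less[OF s, of k a] a
        by (auto intro: nth_mem)
    qed
  qed
  moreover have "distinct (take a xs)" using s by (simp add: strict_sorted_iff distinct_take)
  ultimately show ?thesis using a by (simp add: distinct_card)
qed

lemma sorted_list_nth_less: "finite R \<Longrightarrow> a < b \<Longrightarrow> b < card R \<Longrightarrow>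
   sorted_list_of_set R ! a < sorted_list_of_set R ! b"
  using sorted_wrt_nth_less[OF strict_sorted_list_of_set, of a b R] by simp

lemma sorted_list_nth_mem: "finite R \<Longrightarrow> a < card R \<Longrightarrow> sorted_list_of_set R ! a \<in> R"
  using nth_mem[of a "sorted_list_of_set R"] by simp

lemma tree_restr_props:
  assumes R: "R \<subseteq> {1..nodes r}"
  shows "nodes (tree_restr r R) = card R \<and>
    Aset (tree_restr r R) = {(a,b). a < b \<and> b < card R \<and>
        (sorted_list_of_set R ! a - 1, sorted_list_of_set R ! b - 1) \<in> Aset r}"
proof -
  let ?Rs = "sorted_list_of_set R"
  let ?g = "gam r"
  let ?v = "map (\<lambda>i. ?g ! (i - 1)) ?Rs"
  have fin: "finite R" using R finite_subset by blast
  have lRs: "length ?Rs = card R" by simp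
  have Rmem: "a < card R \<Longrightarrow> ?Rs ! a \<in> R" for a using sorted_list_nth_mem[OF fin] by blast
  have gp: "length ?g = nodes r" "distinct ?g" "NI ?g = Aset r" using gam_props[of r] by auto
  have rng: "a < card R \<Longrightarrow> 1 \<le> ?Rs ! a \<and> ?Rs ! a \<le> nodes r" for a
  proof -
    assume "a < card R"
    then have "?Rs ! a \<in> {1..nodes r}" using Rmem[of a] R by (rule_tac subsetD) auto
    then show ?thesis by simp
  qed
  have vnth: "a < card R \<Longrightarrow> ?v ! a = ?g ! (?Rs ! a - 1)" for a by simp
  have dv: "distinct ?v"
    unfolding distinct_conv_nth
  proof (intro allI impI)
    fix a b assume ab: "a < length ?v" "b < length ?v" "a \<noteq> b"
    then have "?Rs ! a \<noteq> ?Rs ! b" using nth_eq_iff_index_eq[of ?Rs a b] by simp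
    then have "?Rs ! a - 1 \<noteq> ?Rs ! b - 1" using rng[of a] rng[of b] ab by auto
    moreover have "?Rs ! a - 1 < length ?g" "?Rs ! b - 1 < length ?g" using rng[of a] rng[of b] ab gp by auto
    ultimately show "?v ! a \<noteq> ?v ! b" using gp(2) ab by (simp add: nth_eq_iff_index_eq)
  qed
  have NIv: "NI ?v = {(a,b). a < b \<and> b < card R \<and> (?Rs ! a - 1, ?Rs ! b - 1) \<in> Aset r}"
  proof (rule set_eqI)
    fix p :: "nat \<times> nat"
    obtain a b where p: "p = (a,b)" by (cases p)
    have "(a,b) \<in> NI ?v \<longleftrightarrow> a < b \<and> b < card R \<and> (?Rs ! a - 1, ?Rs ! b - 1) \<in> Aset r"
    proof
      assume H: "(a,b) \<in> NI ?v"
      then have ab: "a < b" "b < card R" by (auto simp: NI_def)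
      have lt: "?Rs ! a < ?Rs ! b" using sorted_list_nth_less[OF fin ab] .
      have "?v ! a < ?v ! b" using H by (simp only: NI_def mem_Collect_eq case_prod_conv)
      then have "?g ! (?Rs ! a - 1) < ?g ! (?Rs ! b - 1)" using ab vnth by simp
      moreover have "?Rs ! a - 1 < ?Rs ! b - 1" "?Rs ! b - 1 < length ?g" using ab lt rng[of a] rng[of b] gp(1)
        by auto
      ultimately have "(?Rs ! a - 1, ?Rs ! b - 1) \<in> NI ?g" by (simp add: NI_def)
      then show "a < b \<and> b < card R \<and> (?Rs ! a - 1, ?Rs ! b - 1) \<in> Aset r" using ab gp by simp
    next
      assume H: "a < b \<and> b < card R \<and> (?Rs ! a - 1, ?Rs ! b - 1) \<in> Aset r"
      then have "(?Rs ! a - 1, ?Rs ! b - 1) \<in> NI ?g" using gp by simp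
      then show "(a,b) \<in> NI ?v" using H by (simp add: NI_def)
    qed
    then show "p \<in> NI ?v \<longleftrightarrow> p \<in> {(a,b). a < b \<and> b < card R \<and> (?Rs ! a - 1, ?Rs ! b - 1) \<in> Aset r}"
      using p by simp
  qed
  have K: "Kc (NI ?v) (card R) = NI ?v"
  proof (rule closed_Kc)
    show "NI ?v \<subseteq> {(i, j). i < j \<and> j < card R}" using NIv by auto
  next
    fix i j k assume H: "(i,j) \<in> NI ?v" "i \<le> k" "k < j"
    then have ij: "i < j" "j < card R" "(?Rs ! i - 1, ?Rs ! j - 1) \<in> Aset r" using NIv by auto
    have "?Rs ! i \<le> ?Rs ! k" using sorted_list_nth_less[OF fin, of i k] H ij by (cases "i = k") auto
    moreover have "?Rs ! k < ?Rs ! j" using sorted_list_nth_less[OF fin, of k j] H ij by auto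
    ultimately have "(?Rs ! k - 1, ?Rs ! j - 1) \<in> Aset r"
      using Aset_closed[OF ij(3)] rng[of i] rng[of k] H ij by auto
    then show "(k,j) \<in> NI ?v" using NIv H ij by auto
  qed
  have tr: "tree_restr r R = lam (st ?v)" by (simp add: tree_restr_def perm_restr_def)
  have "nodes (lam (st ?v)) = card R" "Aset (lam (st ?v)) = Kc (NI ?v) (card R)"
    using lam_props[of "st ?v"] distinct_st[OF dv] by auto
  then show ?thesis using tr K NIv by simp
qed



lemma card_less_psub: "finite B \<Longrightarrow> A \<subseteq> B \<Longrightarrow> x \<in> B \<Longrightarrow> x \<notin> A \<Longrightarrow> card A < card B"
  by (metis psubsetI psubset_card_mono)

lemma piR_props:
  assumes R: "R \<subseteq> {1..n}"
  shows "length (piR n R) = n \<and> distinct (piR n R) \<and>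
         NI (piR n R) = {(i,j). i < j \<and> j < n \<and> \<not> (Suc i \<notin> R \<and> Suc j \<in> R)}"
proof -
  define C where "C = {1..n} - R"
  let ?Rs = "sorted_list_of_set R" and ?Cs = "sorted_list_of_set C"
  define w where "w = ?Rs @ ?Cs"
  have finR: "finite R" using R finite_subset by blast
  have finC: "finite C" by (simp add: C_def)
  have cardRC: "card R + card C = n"
  proof -
    have "card ({1..n} - R) = n - card R" using R finR by (simp add: card_Diff_subset)
    moreover have "card R \<le> n" using R card_mono[of "{1..n}" R] by simp
    ultimately show ?thesis by (simp add: C_def)
  qed
  have lw: "length w = n" using cardRC by (simp add: w_def)
  have dw: "distinct w" using finR by (auto simp: w_def C_def)
  define pos where "pos x = (if x \<in> R then card {y \<in> R. y < x} else card R + card {y \<in> C. y < x})" for x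
  have posw: "pos x < n \<and> w ! pos x = x" if x: "x \<in> {1..n}" for x
  proof (cases "x \<in> R")
    case True
    then obtain a where a: "a < length ?Rs" "?Rs ! a = x" using finR by (metis in_set_conv_nth set_sorted_list_of_set)
    have "card {y \<in> set ?Rs. y < ?Rs ! a} = a" using sorted_idx[OF strict_sorted_list_of_set a(1)] .
    then have "pos x = a" using True a finR by (simp add: pos_def)
    then show ?thesis using a lw by (simp add: w_def nth_append cardRC[symmetric])
  next
    case False
    then have xC: "x \<in> C" using x by (simp add: C_def)
    then obtain a where a: "a < length ?Cs" "?Cs ! a = x" using finC by (metis in_set_conv_nth set_sorted_list_of_set)
    have "card {y \<in> set ?Cs. y < ?Cs ! a} = a" using sorted_idx[OF strict_sorted_list_of_set a(1)] .
    then have "pos x = card R + a" using False a finC by (simp add: pos_def)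
    then show ?thesis using a lw finR by (simp add: w_def nth_append cardRC[symmetric])
  qed
  have pinv: "piR n R ! k = Suc (pos (Suc k))" if k: "k < n" for k
  proof -
    have e1: "piR n R = perm_inv w" by (simp add: piR_def w_def C_def)
    have e2: "[1..<Suc (length w)] ! k = Suc k" using k lw by (simp del: upt_Suc)
    have "perm_inv w ! k = Suc (LEAST i. i < length w \<and> w ! i = [1..<Suc (length w)] ! k)"
      using k lw unfolding perm_inv_def by (simp del: upt_Suc)
    then have "piR n R ! k = Suc (LEAST i. i < length w \<and> w ! i = Suc k)"
      using e1 e2 by simp
    moreover have "(LEAST i. i < length w \<and> w ! i = Suc k) = pos (Suc k)"
    proof (rule Least_equality)
      show "pos (Suc k) < length w \<and> w ! pos (Suc k) = Suc k" using posw[of "Suc k"] k lw by simp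
    next
      fix y assume "y < length w \<and> w ! y = Suc k"
      then show "pos (Suc k) \<le> y" using posw[of "Suc k"] k lw dw nth_eq_iff_index_eq by fastforce
    qed
    ultimately show ?thesis by simp
  qed
  have lp: "length (piR n R) = n"
  proof -
    have "piR n R = perm_inv w" by (simp add: piR_def w_def C_def)
    then show ?thesis using lw by (simp add: perm_inv_def del: upt_Suc)
  qed
  have posless: "pos x < pos y \<longleftrightarrow> \<not> (x \<notin> R \<and> y \<in> R)" if xy: "x < y" "y \<le> n" "1 \<le> x" for x y
  proof (cases "x \<in> R")
    case True
    show ?thesis
    proof (cases "y \<in> R")
      case True
      have "card {z \<in> R. z < x} < card {z \<in> R. z < y}"
        by (rule card_less_psub[of _ _ x]) (use finR xy \<open>x \<in> R\<close> in auto)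
      then show ?thesis using True \<open>x \<in> R\<close> by (simp add: pos_def)
    next
      case False
      have "card {z \<in> R. z < x} < card R"
        by (rule card_less_psub[of _ _ x]) (use finR xy \<open>x \<in> R\<close> in auto)
      then show ?thesis using False \<open>x \<in> R\<close> by (simp add: pos_def)
    qed
  next
    case False
    show ?thesis
    proof (cases "y \<in> R")
      case True
      have "card {z \<in> R. z < y} < card R"
        by (rule card_less_psub[of _ _ y]) (use finR xy \<open>y \<in> R\<close> in auto)
      then show ?thesis using True \<open>x \<notin> R\<close> by (simp add: pos_def)
    next
      case False
      have xC: "x \<in> C" using False \<open>x \<notin> R\<close> xy by (simp add: C_def)
      have "card {z \<in> C. z < x} < card {z \<in> C. z < y}"
        by (rule card_less_psub[of _ _ x]) (use finC xy xC in auto)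
      then show ?thesis using False \<open>x \<notin> R\<close> by (simp add: pos_def)
    qed
  qed
  have dp: "distinct (piR n R)"
    unfolding distinct_conv_nth
  proof (intro allI impI)
    fix i j assume ij: "i < length (piR n R)" "j < length (piR n R)" "i \<noteq> j"
    then have "w ! pos (Suc i) \<noteq> w ! pos (Suc j)" using posw[of "Suc i"] posw[of "Suc j"] lp by auto
    then show "piR n R ! i \<noteq> piR n R ! j" using pinv ij lp by auto
  qed
  have NIp: "NI (piR n R) = {(i,j). i < j \<and> j < n \<and> \<not> (Suc i \<notin> R \<and> Suc j \<in> R)}"
  proof (rule set_eqI)
    fix p :: "nat \<times> nat"
    obtain i j where p: "p = (i,j)" by (cases p)
    have "(i,j) \<in> NI (piR n R) \<longleftrightarrow> i < j \<and> j < n \<and> \<not> (Suc i \<notin> R \<and> Suc j \<in> R)"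
    proof (cases "i < j \<and> j < n")
      case True
      then have "(i,j) \<in> NI (piR n R) \<longleftrightarrow> pos (Suc i) < pos (Suc j)"
        using pinv[of i] pinv[of j] lp by (simp add: NI_def)
      then show ?thesis using posless[of "Suc i" "Suc j"] True by simp
    next
      case False
      then show ?thesis using lp by (auto simp: NI_def)
    qed
    then show "p \<in> NI (piR n R) \<longleftrightarrow> p \<in> {(i,j). i < j \<and> j < n \<and> \<not> (Suc i \<notin> R \<and> Suc j \<in> R)}"
      using p by simp
  qed
  show ?thesis using lp dp NIp by simp
qed

lemma finite_Ytrees: "finite (Ytrees n)"
proof (induction n rule: less_induct)
  case (less n)
  show ?case
  proof (cases n)
    case 0
    then have "Ytrees n = {Leaf}" by (auto simp: Ytrees_def elim: nodes.elims)
    then show ?thesis by simp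
  next
    case (Suc m)
    have "Ytrees n \<subseteq> (\<lambda>(l,r). Node l r) ` (\<Union>k\<le>m. Ytrees k \<times> Ytrees (m - k))"
    proof
      fix t assume "t \<in> Ytrees n"
      then obtain l r where t: "t = Node l r" "nodes l + nodes r = m" using Suc
        by (cases t) (auto simp: Ytrees_def)
      then show "t \<in> (\<lambda>(l,r). Node l r) ` (\<Union>k\<le>m. Ytrees k \<times> Ytrees (m - k))"
        by (auto simp: Ytrees_def image_iff intro!: bexI[of _ "nodes l"])
    qed
    moreover have "finite (\<Union>k\<le>m. Ytrees k \<times> Ytrees (m - k))"
      using less Suc by auto
    ultimately show ?thesis by (meson finite_imageI finite_subset)
  qed
qed

lemma finite_up: "finite {u. tamari_le t u \<and> P u}"
proof -
  have "{u. tamari_le t u \<and> P u} \<subseteq> Ytrees (nodes t)" using tamari_le_nodes by (auto simp: Ytrees_def)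
  then show ?thesis using finite_Ytrees finite_subset by blast
qed

lemma finite_down: "finite {u. tamari_le u t \<and> P u}"
proof -
  have "{u. tamari_le u t \<and> P u} \<subseteq> Ytrees (nodes t)" using tamari_le_nodes by (auto simp: Ytrees_def)
  then show ?thesis using finite_Ytrees finite_subset by blast
qed

definition msr :: "tree \<Rightarrow> nat" where
  "msr s = nodes s * nodes s - card (Aset s)"

lemma finite_Aset: "finite (Aset x)" and card_Aset: "card (Aset x) \<le> nodes x * nodes x"
proof -
  have sub: "Aset x \<subseteq> {..<nodes x} \<times> {..<nodes x}" using Aset_bound by fastforce
  then show "finite (Aset x)" using finite_subset by blast
  show "card (Aset x) \<le> nodes x * nodes x" using card_mono[OF _ sub] by (simp add: card_cartesian_product)
qed

lemma msr_less: "tamari_le u s \<Longrightarrow> u \<noteq> s \<Longrightarrow> msr u < msr s"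
proof -
  assume "tamari_le u s" "u \<noteq> s"
  then have "nodes s = nodes u" "Aset s \<subset> Aset u" using tamari_le_Aset by blast+
  moreover have "card (Aset s) < card (Aset u)" using calculation(2) finite_Aset psubset_card_mono by blast
  ultimately show ?thesis using card_Aset[of u] by (simp add: msr_def)
qed

function mob :: "tree \<Rightarrow> tree \<Rightarrow> int" where
  "mob t s = (if \<not> tamari_le t s then 0 else if t = s then 1
      else - (\<Sum>u\<in>{u. tamari_le t u \<and> tamari_le u s \<and> u \<noteq> s}. mob t u))"
  by auto
termination
  by (relation "measure (\<lambda>(t,s). msr s)") (auto intro: msr_less)

declare mob.simps[simp del]

lemma mob_nonle: "\<not> tamari_le t s \<Longrightarrow> mob t s = 0"
  by (simp add: mob.simps)

lemma mob_refl: "mob t t = 1"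
  by (simp add: mob.simps)

lemma interval_split: "tamari_le t s \<Longrightarrow> {u. tamari_le t u \<and> tamari_le u s} = insert s {u. tamari_le t u \<and> tamari_le u s \<and> u \<noteq> s}"
  by auto

lemma mob_sum: "tamari_le t s \<Longrightarrow> (\<Sum>u\<in>{u. tamari_le t u \<and> tamari_le u s}. mob t u) = (if t = s then 1 else 0)"
proof -
  assume ts: "tamari_le t s"
  have fin: "finite {u. tamari_le t u \<and> tamari_le u s \<and> u \<noteq> s}" using finite_up[of t "\<lambda>u. tamari_le u s \<and> u \<noteq> s"] by simp
  show ?thesis
  proof (cases "t = s")
    case True
    then have "{u. tamari_le t u \<and> tamari_le u s} = {s}" using tamari_le_antisym by auto
    then show ?thesis using True by (simp add: mob_refl)
  next
    case False
    have "(\<Sum>u\<in>{u. tamari_le t u \<and> tamari_le u s}. mob t u) =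
          mob t s + (\<Sum>u\<in>{u. tamari_le t u \<and> tamari_le u s \<and> u \<noteq> s}. mob t u)"
      using interval_split[OF ts] fin by simp
    also have "\<dots> = 0" using False ts by (simp add: mob.simps[of t s])
    finally show ?thesis using False by simp
  qed
qed

lemma tamari_mobius_eq: "tamari_mobius = mob"
  unfolding tamari_mobius_def
proof (rule the_equality)
  show "(\<forall>t s. \<not> tamari_le t s \<longrightarrow> mob t s = 0) \<and>
    (\<forall>t s. tamari_le t s \<longrightarrow> (\<Sum>u\<in>{u. tamari_le t u \<and> tamari_le u s}. mob t u) = (if t = s then 1 else 0))"
    using mob_nonle mob_sum by blast
next
  fix mu :: "tree \<Rightarrow> tree \<Rightarrow> int"
  assume H: "(\<forall>t s. \<not> tamari_le t s \<longrightarrow> mu t s = 0) \<and>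
    (\<forall>t s. tamari_le t s \<longrightarrow> (\<Sum>u\<in>{u. tamari_le t u \<and> tamari_le u s}. mu t u) = (if t = s then 1 else 0))"
  have "mu t s = mob t s" for t s
  proof (induction "msr s" arbitrary: s rule: less_induct)
    case less
    show ?case
    proof (cases "tamari_le t s")
      case False
      then show ?thesis using H mob_nonle by simp
    next
      case True
      have fin: "finite {u. tamari_le t u \<and> tamari_le u s \<and> u \<noteq> s}" using finite_up[of t "\<lambda>u. tamari_le u s \<and> u \<noteq> s"] by simp
      have "(\<Sum>u\<in>{u. tamari_le t u \<and> tamari_le u s}. mu t u) =
          mu t s + (\<Sum>u\<in>{u. tamari_le t u \<and> tamari_le u s \<and> u \<noteq> s}. mu t u)"
        using interval_split[OF True] fin by simp
      moreover have "(\<Sum>u\<in>{u. tamari_le t u \<and> tamari_le u s}. mob t u) =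
          mob t s + (\<Sum>u\<in>{u. tamari_le t u \<and> tamari_le u s \<and> u \<noteq> s}. mob t u)"
        using interval_split[OF True] fin by simp
      moreover have "(\<Sum>u\<in>{u. tamari_le t u \<and> tamari_le u s \<and> u \<noteq> s}. mu t u) =
          (\<Sum>u\<in>{u. tamari_le t u \<and> tamari_le u s \<and> u \<noteq> s}. mob t u)"
        using less msr_less by (intro sum.cong) auto
      moreover have "(\<Sum>u\<in>{u. tamari_le t u \<and> tamari_le u s}. mu t u) = (if t = s then 1 else 0)"
        using H True by blast
      ultimately show ?thesis using mob_sum[OF True] by simp
    qed
  qed
  then show "mu = mob" by (intro ext)
qed

function cx :: "(tree \<Rightarrow> rat) \<Rightarrow> tree \<Rightarrow> rat" where
  "cx x u = x u - (\<Sum>v\<in>{v. tamari_le v u \<and> v \<noteq> u}. cx x v * of_int (mob v u))"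
  by auto
termination
  by (relation "measure (\<lambda>(x,u). msr u)") (auto intro: msr_less)

declare cx.simps[simp del]

lemma Mvec_eq: "Mvec v u = of_int (mob v u)"
  by (simp add: Mvec_def tamari_mobius_eq)

lemma Mcoord_eq: "Mcoord x r = (\<Sum>u\<in>{u. tamari_le u r}. x u)"
proof -
  let ?Y = "Ytrees (nodes r)"
  define P where "P c \<longleftrightarrow> (\<forall>v. v \<notin> ?Y \<longrightarrow> c v = 0) \<and> (\<forall>u\<in>?Y. x u = (\<Sum>v\<in>?Y. c v * Mvec v u))" for c
  have finY: "finite ?Y" by (rule finite_Ytrees)
  have downY: "u \<in> ?Y \<Longrightarrow> {v. tamari_le v u} = {v \<in> ?Y. tamari_le v u}" for u
    using tamari_le_nodes by (auto simp: Ytrees_def)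
  define c0 where "c0 v = (if v \<in> ?Y then cx x v else 0)" for v
  have ex: "P c0"
    unfolding P_def
  proof (intro conjI allI impI ballI)
    fix v assume "v \<notin> ?Y" then show "c0 v = 0" by (simp add: c0_def)
  next
    fix u assume u: "u \<in> ?Y"
    have "(\<Sum>v\<in>?Y. c0 v * Mvec v u) = (\<Sum>v\<in>{v \<in> ?Y. tamari_le v u}. c0 v * Mvec v u)"
      using finY by (intro sum.mono_neutral_right) (auto simp: Mvec_eq mob_nonle)
    also have "\<dots> = (\<Sum>v\<in>{v. tamari_le v u}. cx x v * of_int (mob v u))"
      using downY[OF u] by (simp add: c0_def Mvec_eq)
    also have "\<dots> = cx x u * of_int (mob u u) + (\<Sum>v\<in>{v. tamari_le v u \<and> v \<noteq> u}. cx x v * of_int (mob v u))"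
    proof -
      have "{v. tamari_le v u} = insert u {v. tamari_le v u \<and> v \<noteq> u}" by auto
      moreover have "finite {v. tamari_le v u \<and> v \<noteq> u}" using finite_down[of u "\<lambda>v. v \<noteq> u"] by simp
      ultimately show ?thesis by simp
    qed
    also have "\<dots> = x u" by (simp add: mob_refl cx.simps[of x u])
    finally show "x u = (\<Sum>v\<in>?Y. c0 v * Mvec v u)" by simp
  qed
  have val: "c r = (\<Sum>u\<in>{u. tamari_le u r}. x u)" if Pc: "P c" for c
  proof -
    have rY: "r \<in> ?Y" by (simp add: Ytrees_def)
    have xe: "\<forall>u\<in>?Y. x u = (\<Sum>v\<in>?Y. c v * Mvec v u)" using Pc unfolding P_def by blast
    have "(\<Sum>u\<in>{u. tamari_le u r}. x u) = (\<Sum>u\<in>{u \<in> ?Y. tamari_le u r}. x u)"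
      using downY[OF rY] by simp
    also have "\<dots> = (\<Sum>u\<in>{u \<in> ?Y. tamari_le u r}. \<Sum>v\<in>?Y. c v * Mvec v u)"
      using xe by (intro sum.cong) auto
    also have "\<dots> = (\<Sum>v\<in>?Y. \<Sum>u\<in>{u \<in> ?Y. tamari_le u r}. c v * Mvec v u)"
      by (rule sum.swap)
    also have "\<dots> = (\<Sum>v\<in>?Y. c v * (if v = r then 1 else 0))"
    proof (rule sum.cong)
      fix v assume v: "v \<in> ?Y"
      have "(\<Sum>u\<in>{u \<in> ?Y. tamari_le u r}. c v * Mvec v u) = c v * (\<Sum>u\<in>{u \<in> ?Y. tamari_le u r}. Mvec v u)"
        by (rule sum_distrib_left[symmetric])
      also have "(\<Sum>u\<in>{u \<in> ?Y. tamari_le u r}. Mvec v u) = (if v = r then 1 else 0)"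
      proof (cases "tamari_le v r")
        case True
        have sub: "{u. tamari_le v u \<and> tamari_le u r} \<subseteq> {u \<in> ?Y. tamari_le u r}"
        proof
          fix u assume "u \<in> {u. tamari_le v u \<and> tamari_le u r}"
          then have "tamari_le u r" by simp
          then have "nodes r = nodes u" by (rule tamari_le_nodes)
          then show "u \<in> {u \<in> ?Y. tamari_le u r}" using \<open>tamari_le u r\<close> by (simp add: Ytrees_def)
        qed
        have z: "\<forall>u \<in> {u \<in> ?Y. tamari_le u r} - {u. tamari_le v u \<and> tamari_le u r}. Mvec v u = 0"
          using mob_nonle by (auto simp: Mvec_eq)
        have fin2: "finite {u \<in> ?Y. tamari_le u r}" using finY by simp
        have "(\<Sum>u\<in>{u \<in> ?Y. tamari_le u r}. Mvec v u) = (\<Sum>u\<in>{u. tamari_le v u \<and> tamari_le u r}. Mvec v u)"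
          by (rule sum.mono_neutral_right[OF fin2 sub z])
        also have "\<dots> = of_int (\<Sum>u\<in>{u. tamari_le v u \<and> tamari_le u r}. mob v u)"
          by (simp add: Mvec_eq)
        finally show ?thesis using mob_sum[OF True] by simp
      next
        case False
        then have "v \<noteq> r" by auto
        have "(\<Sum>u\<in>{u \<in> ?Y. tamari_le u r}. Mvec v u) = 0"
        proof (rule sum.neutral, rule ballI)
          fix u assume "u \<in> {u \<in> ?Y. tamari_le u r}"
          then have "\<not> tamari_le v u" using False tamari_le_trans by blast
          then show "Mvec v u = 0" by (simp add: Mvec_eq mob_nonle)
        qed
        then show ?thesis using \<open>v \<noteq> r\<close> by simp
      qed
      finally show "(\<Sum>u\<in>{u \<in> ?Y. tamari_le u r}. c v * Mvec v u) = c v * (if v = r then 1 else 0)" .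
    qed simp
    also have "\<dots> = (\<Sum>v\<in>?Y. if v = r then c v else 0)" by (intro sum.cong) auto
    also have "\<dots> = c r" using finY rY by (simp only: sum.delta if_True)
    finally show ?thesis by simp
  qed
  have uniq: "c1 = c2" if "P c1" "P c2" for c1 c2
  proof -
    have "c1 u = c2 u" if u: "u \<in> ?Y" for u
      using u
    proof (induction "msr u" arbitrary: u rule: less_induct)
      case less
      have "(\<Sum>v\<in>?Y. c1 v * Mvec v u) = (\<Sum>v\<in>?Y. c2 v * Mvec v u)"
        using \<open>P c1\<close> \<open>P c2\<close> less.prems unfolding P_def by metis
      then have "(\<Sum>v\<in>?Y. (c1 v - c2 v) * Mvec v u) = 0" by (simp add: sum_subtractf left_diff_distrib)
      moreover have "(\<Sum>v\<in>?Y. (c1 v - c2 v) * Mvec v u) = (c1 u - c2 u) * Mvec u u"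
      proof (rule sum.remove[OF finY less.prems, THEN trans])
        have "(\<Sum>v\<in>?Y - {u}. (c1 v - c2 v) * Mvec v u) = 0"
        proof (rule sum.neutral, rule ballI)
          fix v assume v: "v \<in> ?Y - {u}"
          show "(c1 v - c2 v) * Mvec v u = 0"
          proof (cases "tamari_le v u")
            case True
            then have "msr v < msr u" using msr_less v by auto
            then have "c1 v = c2 v" using less.hyps v by auto
            then show ?thesis by simp
          next
            case False then show ?thesis by (simp add: Mvec_eq mob_nonle)
          qed
        qed
        then show "(c1 u - c2 u) * Mvec u u + (\<Sum>v\<in>?Y - {u}. (c1 v - c2 v) * Mvec v u) = (c1 u - c2 u) * Mvec u u"
          by simp
      qed
      ultimately show ?case by (simp add: Mvec_eq mob_refl)
    qed
    moreover have "c1 u = c2 u" if "u \<notin> ?Y" for u using \<open>P c1\<close> \<open>P c2\<close> that unfolding P_def by auto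
    ultimately show ?thesis by blast
  qed
  have "P (THE c. P c)"
  proof (rule theI[of P c0])
    show "P c0" by (rule ex)
  next
    fix c assume "P c" then show "c = c0" using uniq ex by blast
  qed
  moreover have "Mcoord x r = (THE c. P c) r" unfolding Mcoord_def P_def by simp
  ultimately show ?thesis using val by simp
qed



definition Sset :: "nat \<Rightarrow> nat \<Rightarrow> nat list set" where
  "Sset p q = {is. length is = q \<and> sorted is \<and> set is \<subseteq> {0..p}}"

definition Wset :: "nat \<Rightarrow> nat \<Rightarrow> bool list set" where
  "Wset p q = {w. length w = p + q \<and> length (filter id w) = q}"

fun wd :: "nat \<Rightarrow> nat list \<Rightarrow> bool list" where
  "wd p [] = replicate p False"
| "wd p (i # is) = replicate i False @ True # wd (p - i) (map (\<lambda>x. x - i) is)"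

lemma sorted_map_minus: "sorted xs \<Longrightarrow> sorted (map (\<lambda>x. x - (i::nat)) xs)"
  by (simp add: sorted_iff_nth_mono diff_le_mono)

lemma wd_append:
  "sorted (xs @ m # ys) \<Longrightarrow> set (xs @ m # ys) \<subseteq> {0..p} \<Longrightarrow>
   wd p (xs @ m # ys) = wd m xs @ True # wd (p - m) (map (\<lambda>y. y - m) ys)"
proof (induction "length xs" arbitrary: xs p m ys rule: less_induct)
  case less
  show ?case
  proof (cases xs)
  case Nil then show ?thesis by simp
next
  case (Cons x xs0)
  note CP = less.prems[unfolded Cons]
  have Cons_IH: "\<And>p m ys. sorted (map (\<lambda>y. y - x) xs0 @ m # ys) \<Longrightarrow> set (map (\<lambda>y. y - x) xs0 @ m # ys) \<subseteq> {0..p} \<Longrightarrow>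
     wd p (map (\<lambda>y. y - x) xs0 @ m # ys) = wd m (map (\<lambda>y. y - x) xs0) @ True # wd (p - m) (map (\<lambda>y. y - m) ys)"
    using less.hyps[of "map (\<lambda>y. y - x) xs0"] Cons by simp
  have xm: "x \<le> m" using CP(1) by (auto simp: sorted_append)
  have mys: "\<forall>y\<in>set ys. m \<le> y" using CP(1) by (auto simp: sorted_append)
  have mp: "m \<le> p" using CP(2) by auto
  have s': "sorted (map (\<lambda>y. y - x) xs0 @ (m - x) # map (\<lambda>y. y - x) ys)"
    using sorted_map_minus[of "xs0 @ m # ys" x] CP(1) by simp
  have b': "set (map (\<lambda>y. y - x) xs0 @ (m - x) # map (\<lambda>y. y - x) ys) \<subseteq> {0..p - x}"
    using CP(2) by auto
  have IH: "wd (p - x) (map (\<lambda>y. y - x) xs0 @ (m - x) # map (\<lambda>y. y - x) ys) =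
      wd (m - x) (map (\<lambda>y. y - x) xs0) @ True # wd (p - x - (m - x)) (map (\<lambda>y. y - (m - x)) (map (\<lambda>y. y - x) ys))"
    using Cons_IH[OF s' b'] .
  have e1: "p - x - (m - x) = p - m" using xm mp by simp
  have e2: "map (\<lambda>y. y - (m - x)) (map (\<lambda>y. y - x) ys) = map (\<lambda>y. y - m) ys"
    using mys xm by (auto intro: map_cong)
  show ?thesis using IH[unfolded e1 e2] Cons by simp
qed
qed

lemma Sset_Cons: "i # is \<in> Sset p (Suc q) \<longleftrightarrow> i \<le> p \<and> (\<forall>x\<in>set is. i \<le> x) \<and> is \<in> Sset p q"
  by (auto simp: Sset_def)

lemma wd_in_Wset: "is \<in> Sset p q \<Longrightarrow> wd p is \<in> Wset p q"
proof (induction "length is" arbitrary: "is" p q rule: less_induct)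
  case less
  show ?case
  proof (cases "is")
  case Nil then show ?thesis using less by (simp add: Sset_def Wset_def)
next
  case (Cons i is0)
  note CP = less.prems[unfolded Cons]
  have Cons_IH: "\<And>p q. map (\<lambda>x. x - i) is0 \<in> Sset p q \<Longrightarrow> wd p (map (\<lambda>x. x - i) is0) \<in> Wset p q"
    using less.hyps Cons by simp
  from CP obtain q' where q: "q = Suc q'" by (cases q) (auto simp: Sset_def)
  have H: "i \<le> p" "\<forall>x\<in>set is0. i \<le> x" "is0 \<in> Sset p q'" using CP q Sset_Cons by auto
  have "map (\<lambda>x. x - i) is0 \<in> Sset (p - i) q'"
    using H sorted_map_minus[of "is0" i] by (auto simp: Sset_def)
  then have "wd (p - i) (map (\<lambda>x. x - i) is0) \<in> Wset (p - i) q'" by (rule Cons_IH)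
  then show ?thesis using H q Cons by (auto simp: Wset_def)
qed
qed

lemma replicate_True_eq: "replicate i False @ True # xs = replicate j False @ True # ys \<Longrightarrow> i = j \<and> xs = ys"
proof (induction i arbitrary: j)
  case 0 then show ?case by (cases j) auto
next
  case (Suc i) then show ?case by (cases j) auto
qed

lemma wd_inj: "is1 \<in> Sset p q \<Longrightarrow> is2 \<in> Sset p q \<Longrightarrow> wd p is1 = wd p is2 \<Longrightarrow> is1 = is2"
proof (induction "length is1" arbitrary: is1 p q is2 rule: less_induct)
  case less
  show ?case
  proof (cases is1)
  case Nil then show ?thesis using less by (simp add: Sset_def)
next
  case (Cons i is10)
  note CP = less.prems[unfolded Cons]
  have Cons_IH: "\<And>p q is2. map (\<lambda>x. x - i) is10 \<in> Sset p q \<Longrightarrow> is2 \<in> Sset p q \<Longrightarrow>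
     wd p (map (\<lambda>x. x - i) is10) = wd p is2 \<Longrightarrow> map (\<lambda>x. x - i) is10 = is2"
    using less.hyps Cons by simp
  from CP obtain q' where q: "q = Suc q'" by (cases q) (auto simp: Sset_def)
  obtain j is2' where is2: "is2 = j # is2'" using CP(2) q by (cases is2) (auto simp: Sset_def)
  have H1: "i \<le> p" "\<forall>x\<in>set is10. i \<le> x" "is10 \<in> Sset p q'" using CP(1) q Sset_Cons by auto
  have H2: "j \<le> p" "\<forall>x\<in>set is2'. j \<le> x" "is2' \<in> Sset p q'" using CP(2) q is2 Sset_Cons by auto
  have eq: "replicate i False @ True # wd (p - i) (map (\<lambda>x. x - i) is10) = replicate j False @ True # wd (p - j) (map (\<lambda>x. x - j) is2')"
    using CP(3) is2 by simp
  have ij: "i = j" and rest: "wd (p - i) (map (\<lambda>x. x - i) is10) = wd (p - i) (map (\<lambda>x. x - i) is2')"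
    using replicate_True_eq[OF eq] by auto
  have "map (\<lambda>x. x - i) is10 \<in> Sset (p - i) q'" using H1 sorted_map_minus[of is10 i] by (auto simp: Sset_def)
  moreover have "map (\<lambda>x. x - i) is2' \<in> Sset (p - i) q'" using H2 ij sorted_map_minus[of is2' i] by (auto simp: Sset_def)
  ultimately have "map (\<lambda>x. x - i) is10 = map (\<lambda>x. x - i) is2'" using Cons_IH rest by blast
  moreover have "inj_on (\<lambda>x. x - i) (set is10 \<union> set is2')"
    using H1 H2 ij by (intro inj_on_diff_nat) auto
  ultimately have "is10 = is2'" using inj_on_map_eq_map by blast
  then show ?thesis using ij is2 Cons by simp
qed
qed

lemma split_first_True: "True \<in> set w \<Longrightarrow> \<exists>i w'. w = replicate i False @ True # w'"
proof (induction w)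
  case Nil then show ?case by simp
next
  case (Cons b w)
  show ?case
  proof (cases b)
    case True then show ?thesis by (rule_tac x=0 in exI) auto
  next
    case False
    then obtain i w' where "w = replicate i False @ True # w'" using Cons by auto
    then show ?thesis using False by (rule_tac x="Suc i" in exI) auto
  qed
qed

lemma no_True: "length (filter id w) = 0 \<Longrightarrow> w = replicate (length w) False"
  by (induction w) (auto split: if_splits)

lemma wd_surj: "w \<in> Wset p q \<Longrightarrow> \<exists>is \<in> Sset p q. wd p is = w"
proof (induction q arbitrary: p w)
  case 0
  then have "w = replicate p False" using no_True[of w] by (simp add: Wset_def)
  then show ?case by (rule_tac x="[]" in bexI) (auto simp: Sset_def)
next
  case (Suc q)
  then have "filter id w \<noteq> []" by (auto simp: Wset_def)
  then obtain b where "b \<in> set w" "id b" by (auto simp: filter_empty_conv)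
  then have "True \<in> set w" by simp
  then obtain i w' where w: "w = replicate i False @ True # w'" using split_first_True by blast
  have ip: "i \<le> p" using Suc.prems w length_filter_le[of id w'] by (simp add: Wset_def)
  have "i + length w' = p + q" "length (filter id w') = q" using Suc.prems w by (auto simp: Wset_def)
  then have "w' \<in> Wset (p - i) q" using ip by (simp add: Wset_def)
  then obtain is' where is': "is' \<in> Sset (p - i) q" "wd (p - i) is' = w'" using Suc.IH by blast
  let ?is = "i # map (\<lambda>x. x + i) is'"
  have "sorted (map (\<lambda>x. x + i) is')" using is'(1) by (simp add: Sset_def sorted_iff_nth_mono)
  then have "?is \<in> Sset p (Suc q)"
    using is'(1) ip by (auto simp: Sset_def)
  moreover have "map (\<lambda>x. x - i) (map (\<lambda>x. x + i) is') = is'" by (induction is') auto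
  then have "wd p ?is = w" using w is'(2) by simp
  ultimately show ?case by blast
qed

lemma wd_bij: "bij_betw (wd p) (Sset p q) (Wset p q)"
  unfolding bij_betw_def
proof
  show "inj_on (wd p) (Sset p q)" using wd_inj by (auto simp: inj_on_def)
  show "wd p ` Sset p q = Wset p q" using wd_in_Wset wd_surj by blast
qed

lemma split_comp:
  "m \<le> z \<Longrightarrow> z \<le> nodes s \<Longrightarrow>
    fst (split_at (fst (split_at s z)) m) = fst (split_at s m) \<and>
    snd (split_at (fst (split_at s z)) m) = fst (split_at (snd (split_at s m)) (z - m)) \<and>
    snd (split_at s z) = snd (split_at (snd (split_at s m)) (z - m))"
proof (induction s arbitrary: m z)
  case Leaf then show ?case by simp
next
  case (Node l r)
  consider "z \<le> nodes l" | "m \<le> nodes l" "nodes l < z" | "nodes l < m" by linarith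
  then show ?case
  proof cases
    case 1
    have n: "nodes (snd (split_at l m)) = nodes l - m" using nodes_split[of m l] 1 Node.prems by simp
    have n2: "nodes (fst (split_at l z)) = z" using nodes_split[of z l] 1 by simp
    have zm: "z - m \<le> nodes l - m" using 1 by simp
    show ?thesis using 1 Node.prems Node.IH(1)[of m z] n n2 zm by (simp add: split_beta)
  next
    case 2
    have n: "nodes (snd (split_at l m)) = nodes l - m" using nodes_split[of m l] 2 by simp
    have e: "z - m - (nodes l - m) - 1 = z - nodes l - 1" using 2 by simp
    have zm: "\<not> z - m \<le> nodes l - m" using 2 by simp
    show ?thesis using 2 Node.prems n e zm by (simp add: split_beta)
  next
    case 3
    have n2: "nodes (fst (split_at r (z - Suc (nodes l)))) = z - Suc (nodes l)"
      using nodes_split[of "z - Suc (nodes l)" r] 3 Node.prems by simp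
    have e: "z - Suc (nodes l) - (m - Suc (nodes l)) = z - m" using 3 Node.prems by simp
    show ?thesis using 3 Node.prems Node.IH(2)[of "m - Suc (nodes l)" "z - Suc (nodes l)"] n2 e
      by (simp add: split_beta)
  qed
qed

lemma length_divide_rev: "length (divide_rev s zs) = Suc (length zs)"
  by (induction zs arbitrary: s) (auto simp: split_beta)

lemma divide_rev_app:
  "(\<forall>y\<in>set zs. m \<le> y \<and> y \<le> nodes s) \<Longrightarrow> sorted_wrt (\<ge>) zs \<Longrightarrow> m \<le> nodes s \<Longrightarrow>
   divide_rev s (zs @ m # xs) = divide_rev (fst (split_at s m)) xs @ divide_rev (snd (split_at s m)) (map (\<lambda>y. y - m) zs)"
proof (induction zs arbitrary: s)
  case Nil then show ?case by (simp add: split_beta)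
next
  case (Cons z zs)
  let ?t = "fst (split_at s z)" and ?tq = "snd (split_at s z)"
  have mz: "m \<le> z" "z \<le> nodes s" using Cons.prems by auto
  have nt: "nodes ?t = z" using nodes_split[of z s] mz by simp
  have IH: "divide_rev ?t (zs @ m # xs) = divide_rev (fst (split_at ?t m)) xs @ divide_rev (snd (split_at ?t m)) (map (\<lambda>y. y - m) zs)"
    using Cons.IH[of ?t] Cons.prems nt mz by auto
  have sc: "fst (split_at ?t m) = fst (split_at s m)"
    "snd (split_at ?t m) = fst (split_at (snd (split_at s m)) (z - m))"
    "?tq = snd (split_at (snd (split_at s m)) (z - m))" using split_comp[OF mz] by auto
  have "divide_rev s (z # zs @ m # xs) = divide_rev ?t (zs @ m # xs) @ [?tq]" by (simp add: split_beta)
  also have "\<dots> = divide_rev (fst (split_at s m)) xs @ divide_rev (snd (split_at s m)) (map (\<lambda>y. y - m) (z # zs))"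
    using IH sc by (simp add: split_beta)
  finally show ?case by simp
qed

lemma divide_app:
  assumes "sorted (xs @ m # ys)" "set (xs @ m # ys) \<subseteq> {0..nodes s}"
  shows "divide s (xs @ m # ys) = divide (fst (split_at s m)) xs @ divide (snd (split_at s m)) (map (\<lambda>y. y - m) ys)"
proof -
  have "divide s (xs @ m # ys) = divide_rev s (rev ys @ m # rev xs)" by (simp add: divide_def)
  also have "\<dots> = divide_rev (fst (split_at s m)) (rev xs) @ divide_rev (snd (split_at s m)) (map (\<lambda>y. y - m) (rev ys))"
    by (rule divide_rev_app) (use assms in \<open>auto simp: sorted_append sorted_wrt_rev\<close>)
  also have "\<dots> = divide (fst (split_at s m)) xs @ divide (snd (split_at s m)) (map (\<lambda>y. y - m) ys)"
    by (simp add: divide_def rev_map)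
  finally show ?thesis .
qed

lemma length_divide: "length (divide s is) = Suc (length is)"
  by (simp add: divide_def length_divide_rev)



definition rk :: "bool \<Rightarrow> bool list \<Rightarrow> nat \<Rightarrow> nat" where
  "rk b w i = length (filter (\<lambda>x. x = b) (take i w))"

definition Nw :: "bool list \<Rightarrow> (nat \<times> nat) set \<Rightarrow> (nat \<times> nat) set \<Rightarrow> (nat \<times> nat) set" where
  "Nw w As At = {(i,j). i < j \<and> j < length w \<and>
     ((\<not> w!i \<and> w!j) \<or> (\<not> w!i \<and> \<not> w!j \<and> (rk False w i, rk False w j) \<in> As) \<or>
      (w!i \<and> w!j \<and> (rk True w i, rk True w j) \<in> At))}"

lemma rk_app_low: "k \<le> length w1 \<Longrightarrow> rk b (w1 @ w2) k = rk b w1 k"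
  by (simp add: rk_def)

lemma rk_app_high: "rk b (w1 @ True # w2) (Suc (length w1) + x) = rk b w1 (length w1) + (if b then 1 else 0) + rk b w2 x"
  by (simp add: rk_def)

lemma rk_Suc: "k < length w \<Longrightarrow> rk b w (Suc k) = rk b w k + (if w!k = b then 1 else 0)"
  by (simp add: rk_def take_Suc_conv_app_nth)

lemma rk_mono: "k \<le> k' \<Longrightarrow> rk b w k \<le> rk b w k'"
proof -
  assume kk: "k \<le> k'"
  have "take k' w = take k w @ take (k' - k) (drop k w)" using take_add[of k "k' - k" w] kk by simp
  then show ?thesis unfolding rk_def by simp
qed

lemma rk_lt: "k < length w \<Longrightarrow> w!k = b \<Longrightarrow> rk b w k < rk b w (length w)"
proof -
  assume k: "k < length w" "w!k = b"
  have "rk b w (Suc k) = Suc (rk b w k)" using rk_Suc[OF k(1)] k(2) by simp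
  moreover have "rk b w (Suc k) \<le> rk b w (length w)" using rk_mono k by simp
  ultimately show ?thesis by simp
qed

lemma Aset_Node_low: "y < nodes l \<Longrightarrow> (x,y) \<in> Aset (Node l r) \<longleftrightarrow> (x,y) \<in> Aset l"
  by (simp add: mem_Aset_Node)

lemma Aset_Node_high: "(Suc (nodes l) + x, Suc (nodes l) + y) \<in> Aset (Node l r) \<longleftrightarrow> (x,y) \<in> Aset r"
proof -
  have "(Suc (nodes l) + x, Suc (nodes l) + y) \<notin> Aset l" using Aset_b2[of "Suc (nodes l) + x" "Suc (nodes l) + y" l] by auto
  then show ?thesis by (simp add: mem_Aset_Node)
qed

lemma Aset_Node_root: "(nodes l, y) \<notin> Aset (Node l r)"
proof -
  have "(nodes l, y) \<notin> Aset l" using Aset_b1[of "nodes l" y l] Aset_b2[of "nodes l" y l] by auto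
  then show ?thesis by (simp add: mem_Aset_Node)
qed

lemma Kc_low:
  assumes "L \<le> n" "\<And>k j. k < j \<Longrightarrow> j < L \<Longrightarrow> (k,j) \<in> N \<longleftrightarrow> (k,j) \<in> N1" "j < L"
  shows "(i,j) \<in> Kc N n \<longleftrightarrow> (i,j) \<in> Kc N1 L"
  using assms unfolding Kc_def by auto

lemma Kc_high:
  assumes "\<And>k j. L < k \<Longrightarrow> k < j \<Longrightarrow> j < n \<Longrightarrow> (k,j) \<in> N \<longleftrightarrow> (k - Suc L, j - Suc L) \<in> N2" "L < i"
  shows "(i,j) \<in> Kc N n \<longleftrightarrow> (i - Suc L, j - Suc L) \<in> Kc N2 (n - Suc L)"
proof
  assume H: "(i,j) \<in> Kc N n"
  then have ij: "i < j" "j < n" and all: "\<forall>k. i \<le> k \<and> k < j \<longrightarrow> (k,j) \<in> N" unfolding Kc_def by auto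
  show "(i - Suc L, j - Suc L) \<in> Kc N2 (n - Suc L)" unfolding Kc_def
  proof (simp only: mem_Collect_eq case_prod_conv, intro conjI allI impI)
    show "i - Suc L < j - Suc L" "j - Suc L < n - Suc L" using ij assms(2) by auto
    fix k assume "i - Suc L \<le> k \<and> k < j - Suc L"
    then have k: "i \<le> k + Suc L" "k + Suc L < j" using assms(2) by auto
    then have "(k + Suc L, j) \<in> N" using all by blast
    then show "(k, j - Suc L) \<in> N2" using assms(1)[of "k + Suc L" j] k ij by simp
  qed
next
  assume H: "(i - Suc L, j - Suc L) \<in> Kc N2 (n - Suc L)"
  then have ij: "i - Suc L < j - Suc L" "j - Suc L < n - Suc L" and all: "\<forall>k. i - Suc L \<le> k \<and> k < j - Suc L \<longrightarrow> (k, j - Suc L) \<in> N2"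
    unfolding Kc_def by auto
  have ij2: "i < j" "j < n" using ij assms(2) by auto
  show "(i,j) \<in> Kc N n" unfolding Kc_def
  proof (simp only: mem_Collect_eq case_prod_conv, intro conjI allI impI)
    show "i < j" "j < n" using ij2 by auto
    fix k assume "i \<le> k \<and> k < j"
    then have k: "i \<le> k" "k < j" by auto
    then have "i - Suc L \<le> k - Suc L" "k - Suc L < j - Suc L" using assms(2) by auto
    then have "(k - Suc L, j - Suc L) \<in> N2" using all by blast
    then show "(k, j) \<in> N" using assms(1)[of k j] k ij2 assms(2) by simp
  qed
qed

lemma Kc_concat:
  fixes wl wr :: "bool list" and s l r :: tree
  assumes c1: "rk False wl (length wl) = m" and c2: "rk True wl (length wl) = nodes l"
    and mp: "m \<le> nodes s"
  shows "(i,j) \<in> Kc (Nw (wl @ True # wr) (Aset s) (Aset (Node l r))) (length wl + 1 + length wr) \<longleftrightarrow>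
   (i,j) \<in> Kc (Nw wl (Aset (fst (split_at s m))) (Aset l)) (length wl) \<or> (i < length wl \<and> j = length wl) \<or>
   (Suc (length wl) \<le> i \<and> Suc (length wl) \<le> j \<and>
     (i - Suc (length wl), j - Suc (length wl)) \<in> Kc (Nw wr (Aset (snd (split_at s m))) (Aset r)) (length wr))"
proof -
  let ?w = "wl @ True # wr" and ?L = "length wl" and ?n = "length wl + 1 + length wr"
  let ?N = "Nw ?w (Aset s) (Aset (Node l r))"
  let ?N1 = "Nw wl (Aset (fst (split_at s m))) (Aset l)"
  let ?N2 = "Nw wr (Aset (snd (split_at s m))) (Aset r)"
  have lw: "length ?w = ?n" by simp
  have P1: "(k,j) \<in> ?N \<longleftrightarrow> (k,j) \<in> ?N1" if kj: "k < j" "j < ?L" for k j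
  proof -
    have wk: "?w ! k = wl ! k" "?w ! j = wl ! j" using kj by (auto simp: nth_append)
    have rkk: "rk b ?w k = rk b wl k" "rk b ?w j = rk b wl j" for b using kj rk_app_low[of _ wl] by auto
    have mem: "(k,j) \<in> ?N \<longleftrightarrow> ((\<not> wl!k \<and> wl!j) \<or> (\<not> wl!k \<and> \<not> wl!j \<and> (rk False wl k, rk False wl j) \<in> Aset s) \<or>
      (wl!k \<and> wl!j \<and> (rk True wl k, rk True wl j) \<in> Aset (Node l r)))"
      unfolding Nw_def using kj wk rkk by simp
    have mem1: "(k,j) \<in> ?N1 \<longleftrightarrow> ((\<not> wl!k \<and> wl!j) \<or> (\<not> wl!k \<and> \<not> wl!j \<and> (rk False wl k, rk False wl j) \<in> Aset (fst (split_at s m))) \<or>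
      (wl!k \<and> wl!j \<and> (rk True wl k, rk True wl j) \<in> Aset l))"
      unfolding Nw_def using kj by simp
    have F: "\<not> wl ! j \<Longrightarrow> (rk False wl k, rk False wl j) \<in> Aset s \<longleftrightarrow> (rk False wl k, rk False wl j) \<in> Aset (fst (split_at s m))"
    proof -
      assume "\<not> wl ! j"
      then have "rk False wl j < m" using rk_lt[of j wl False] kj c1 by simp
      then show ?thesis using Aset_split_fst[OF mp, of "rk False wl k" "rk False wl j"] by simp
    qed
    have T: "wl ! j \<Longrightarrow> (rk True wl k, rk True wl j) \<in> Aset (Node l r) \<longleftrightarrow> (rk True wl k, rk True wl j) \<in> Aset l"
    proof -
      assume "wl ! j"
      then have "rk True wl j < nodes l" using rk_lt[of j wl True] kj c2 by simp
      then show ?thesis by (rule Aset_Node_low)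
    qed
    show ?thesis
    proof (cases "wl ! j")
      case True then show ?thesis using mem mem1 T by simp
    next
      case False then show ?thesis using mem mem1 F by simp
    qed
  qed
  have P2: "(k,j) \<in> ?N \<longleftrightarrow> (k - Suc ?L, j - Suc ?L) \<in> ?N2" if kj: "?L < k" "k < j" "j < ?n" for k j
  proof -
    define x where "x = k - Suc ?L"
    define y where "y = j - Suc ?L"
    have xy: "k = Suc ?L + x" "j = Suc ?L + y" using kj by (auto simp: x_def y_def)
    have wk: "?w ! k = wr ! x" "?w ! j = wr ! y" using xy by (auto simp: nth_append)
    have rF: "rk False ?w k = m + rk False wr x" "rk False ?w j = m + rk False wr y"
      using xy rk_app_high[of False wl wr] c1 by auto
    have rT: "rk True ?w k = Suc (nodes l) + rk True wr x" "rk True ?w j = Suc (nodes l) + rk True wr y"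
      using xy rk_app_high[of True wl wr] c2 by auto
    have F: "(m + a, m + b) \<in> Aset s \<longleftrightarrow> (a, b) \<in> Aset (snd (split_at s m))" for a b
      using Aset_split_snd[OF mp, of a b] by (simp add: add.commute)
    have T: "(Suc (nodes l) + a, Suc (nodes l) + b) \<in> Aset (Node l r) \<longleftrightarrow> (a,b) \<in> Aset r" for a b
      by (rule Aset_Node_high)
    have xy2: "k - Suc ?L = x" "j - Suc ?L = y" using xy by auto
    show ?thesis unfolding Nw_def using kj wk rF rT F T xy xy2 by auto
  qed
  consider "j < ?L" | "j = ?L" | "?L < j" by linarith
  then show ?thesis
  proof cases
    case 1
    have "(i,j) \<in> Kc ?N ?n \<longleftrightarrow> (i,j) \<in> Kc ?N1 ?L" by (rule Kc_low) (use P1 1 in auto)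
    then show ?thesis using 1 by auto
  next
    case 2
    have "(i,j) \<in> Kc ?N ?n \<longleftrightarrow> i < ?L"
    proof
      assume "(i,j) \<in> Kc ?N ?n" then show "i < ?L" using 2 by (simp add: Kc_def)
    next
      assume iL: "i < ?L"
      have "(k, ?L) \<in> ?N" if k: "k < ?L" for k
      proof (cases "wl ! k")
        case True
        have "rk True wl k < nodes l" using rk_lt[of k wl True] k True c2 by simp
        then have "(rk True wl k, nodes l) \<in> Aset (Node l r)" by (simp add: mem_Aset_Node)
        moreover have "rk True ?w ?L = nodes l" using c2 rk_app_low[of ?L wl True] by simp
        moreover have "rk True ?w k = rk True wl k" using k rk_app_low[of k wl True] by simp
        ultimately show ?thesis using k True unfolding Nw_def by (simp add: nth_append)
      next
        case False
        then show ?thesis using k unfolding Nw_def by (simp add: nth_append)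
      qed
      then show "(i,j) \<in> Kc ?N ?n" using iL 2 unfolding Kc_def by auto
    qed
    moreover have "(i,j) \<notin> Kc ?N1 ?L" using 2 by (simp add: Kc_def)
    ultimately show ?thesis using 2 by auto
  next
    case 3
    show ?thesis
    proof (cases "?L < i")
      case True
      have "(i,j) \<in> Kc ?N ?n \<longleftrightarrow> (i - Suc ?L, j - Suc ?L) \<in> Kc ?N2 (?n - Suc ?L)"
        by (rule Kc_high) (use P2 True in auto)
      moreover have "?n - Suc ?L = length wr" by simp
      moreover have "(i,j) \<notin> Kc ?N1 ?L" using 3 by (simp add: Kc_def)
      ultimately show ?thesis using True 3 by auto
    next
      case False
      have "(?L, j) \<notin> ?N"
      proof
        assume H: "(?L, j) \<in> ?N"
        have wL: "?w ! ?L = True" by simp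
        have rL: "rk True ?w ?L = nodes l" using c2 rk_app_low[of ?L wl True] by simp
        define y where "y = j - Suc ?L"
        have y: "j = Suc ?L + y" using 3 by (simp add: y_def)
        have rj: "rk True ?w j = Suc (nodes l) + rk True wr y" using y rk_app_high[of True wl wr] c2 by simp
        have "(nodes l, Suc (nodes l) + rk True wr y) \<notin> Aset (Node l r)" by (rule Aset_Node_root)
        then show False using H wL rL rj unfolding Nw_def by auto
      qed
      then have "(i,j) \<notin> Kc ?N ?n" using False 3 unfolding Kc_def by (auto intro!: exI[of _ ?L])
      moreover have "(i,j) \<notin> Kc ?N1 ?L" using 3 by (simp add: Kc_def)
      ultimately show ?thesis using False 3 by auto
    qed
  qed
qed

lemma Wset_counts: "w \<in> Wset p q \<Longrightarrow> rk True w (length w) = q \<and> rk False w (length w) = p \<and> length w = p + q"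
proof -
  assume w: "w \<in> Wset p q"
  have e1: "filter (\<lambda>x. x = True) w = filter id w" by (induction w) auto
  have e2: "filter (\<lambda>x. x = False) w = filter (\<lambda>x. \<not> id x) w" by (induction w) auto
  have "length (filter id w) + length (filter (\<lambda>x. \<not> id x) w) = length w" by (rule sum_length_filter_compl)
  then show ?thesis using w e1 e2 by (simp add: rk_def Wset_def)
qed

lemma rk_replicate: "i \<le> p \<Longrightarrow> rk False (replicate p False) i = i"
  by (simp add: rk_def)

lemma graft_divide:
  "is \<in> Sset (nodes s) (nodes t) \<Longrightarrow> nodes (graft t (divide s is)) = nodes s + nodes t \<and>
    Aset (graft t (divide s is)) = Kc (Nw (wd (nodes s) is) (Aset s) (Aset t)) (nodes s + nodes t)"
proof (induction t arbitrary: s "is")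
  case Leaf
  then have is0: "is = []" by (simp add: Sset_def)
  let ?p = "nodes s"
  have g: "graft Leaf (divide s is) = s" using is0 by (simp add: divide_def)
  have N: "Nw (wd ?p is) (Aset s) (Aset Leaf) = Aset s"
  proof (rule set_eqI)
    fix x :: "nat \<times> nat"
    obtain i j where x: "x = (i,j)" by (cases x)
    have "(i,j) \<in> Nw (replicate ?p False) (Aset s) {} \<longleftrightarrow> i < j \<and> j < ?p \<and> (i,j) \<in> Aset s"
      unfolding Nw_def using rk_replicate[of i ?p] rk_replicate[of j ?p] by auto
    also have "\<dots> \<longleftrightarrow> (i,j) \<in> Aset s" using Aset_bound[of i j s] by auto
    finally show "x \<in> Nw (wd ?p is) (Aset s) (Aset Leaf) \<longleftrightarrow> x \<in> Aset s" using x is0 by simp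
  qed
  have "Kc (Aset s) ?p = Aset s"
  proof (rule closed_Kc)
    show "Aset s \<subseteq> {(i, j). i < j \<and> j < ?p}"
    proof
      fix x assume "x \<in> Aset s"
      then show "x \<in> {(i, j). i < j \<and> j < ?p}" using Aset_bound[of "fst x" "snd x" s] by (cases x) auto
    qed
  next
    fix i j k assume "(i,j) \<in> Aset s" "i \<le> k" "k < j"
    then show "(k,j) \<in> Aset s" by (rule Aset_closed)
  qed
  then show ?case using g N by simp
next
  case (Node l r)
  let ?p = "nodes s" and ?nl = "nodes l"
  have lis: "length is = ?nl + 1 + nodes r" and sis: "sorted is" and bis: "set is \<subseteq> {0..?p}"
    using Node.prems by (auto simp: Sset_def)
  define xs where "xs = take ?nl is"
  define mm where "mm = is ! ?nl"
  define ys where "ys = drop (Suc ?nl) is"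
  have isd: "is = xs @ mm # ys" unfolding xs_def mm_def ys_def using lis id_take_nth_drop[of ?nl "is"] by simp
  have srt: "sorted (xs @ mm # ys)" using sis isd by simp
  have bnd: "set (xs @ mm # ys) \<subseteq> {0..?p}" using bis isd by simp
  have mmp: "mm \<le> ?p" using bnd by auto
  let ?a = "fst (split_at s mm)" and ?b = "snd (split_at s mm)"
  have na: "nodes ?a = mm" and nb: "nodes ?b = ?p - mm" using nodes_split[OF mmp] by auto
  let ?ys' = "map (\<lambda>y. y - mm) ys"
  have xsS: "xs \<in> Sset (nodes ?a) (nodes l)"
    using srt bnd lis na by (auto simp: Sset_def xs_def sorted_append)
  have ysS: "?ys' \<in> Sset (nodes ?b) (nodes r)"
  proof -
    have "sorted ys" using srt by (simp add: sorted_append)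
    then have "sorted ?ys'" by (rule sorted_map_minus)
    moreover have "length ?ys' = nodes r" using lis by (simp add: ys_def)
    moreover have "set ?ys' \<subseteq> {0..nodes ?b}" using bnd nb by auto
    ultimately show ?thesis by (simp add: Sset_def)
  qed
  have dv: "divide s is = divide ?a xs @ divide ?b ?ys'" using divide_app[OF srt bnd] isd by simp
  have ld: "length (divide ?a xs) = Suc ?nl" using xsS by (simp add: length_divide Sset_def)
  have gr: "graft (Node l r) (divide s is) = Node (graft l (divide ?a xs)) (graft r (divide ?b ?ys'))"
    using dv ld by simp
  have IHl: "nodes (graft l (divide ?a xs)) = mm + ?nl \<and>
     Aset (graft l (divide ?a xs)) = Kc (Nw (wd mm xs) (Aset ?a) (Aset l)) (mm + ?nl)"
    using Node.IH(1)[OF xsS] na by simp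
  have IHr: "nodes (graft r (divide ?b ?ys')) = ?p - mm + nodes r \<and>
     Aset (graft r (divide ?b ?ys')) = Kc (Nw (wd (?p - mm) ?ys') (Aset ?b) (Aset r)) (?p - mm + nodes r)"
    using Node.IH(2)[OF ysS] nb by simp
  let ?w1 = "wd mm xs" and ?w2 = "wd (?p - mm) ?ys'"
  have wis: "wd ?p is = ?w1 @ True # ?w2" using wd_append[OF srt bnd] isd by simp
  have c1: "rk True ?w1 (length ?w1) = ?nl" "rk False ?w1 (length ?w1) = mm" "length ?w1 = mm + ?nl"
    using Wset_counts[OF wd_in_Wset[OF xsS[unfolded na]]] by auto
  have c2: "length ?w2 = ?p - mm + nodes r"
    using Wset_counts[OF wd_in_Wset[OF ysS[unfolded nb]]] by auto
  have nodes_eq: "nodes (graft (Node l r) (divide s is)) = ?p + nodes (Node l r)"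
    using gr IHl IHr mmp by simp
  have tot: "length ?w1 + 1 + length ?w2 = ?p + nodes (Node l r)" using c1 c2 mmp by simp
  have "(i,j) \<in> Aset (graft (Node l r) (divide s is)) \<longleftrightarrow>
        (i,j) \<in> Kc (Nw (wd ?p is) (Aset s) (Aset (Node l r))) (?p + nodes (Node l r))" for i j
  proof -
    have "(i,j) \<in> Aset (graft (Node l r) (divide s is)) \<longleftrightarrow>
      (i,j) \<in> Kc (Nw ?w1 (Aset ?a) (Aset l)) (length ?w1) \<or> (i < length ?w1 \<and> j = length ?w1) \<or>
      (Suc (length ?w1) \<le> i \<and> Suc (length ?w1) \<le> j \<and>
        (i - Suc (length ?w1), j - Suc (length ?w1)) \<in> Kc (Nw ?w2 (Aset ?b) (Aset r)) (length ?w2))"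
      using gr IHl IHr c1 c2 by (simp add: mem_Aset_Node)
    also have "\<dots> \<longleftrightarrow> (i,j) \<in> Kc (Nw (?w1 @ True # ?w2) (Aset s) (Aset (Node l r))) (length ?w1 + 1 + length ?w2)"
      using Kc_concat[where wl="wd mm xs" and wr="wd (nodes s - mm) (map (\<lambda>y. y - mm) ys)" and m=mm and s=s and l=l and r=r and i=i and j=j] c1 mmp by simp
    finally show ?thesis using wis tot by simp
  qed
  then have "Aset (graft (Node l r) (divide s is)) = Kc (Nw (wd ?p is) (Aset s) (Aset (Node l r))) (?p + nodes (Node l r))"
    by (intro set_eqI) (case_tac x, simp)
  then show ?case using nodes_eq by simp
qed



lemma rk_card: "i \<le> length w \<Longrightarrow> rk b w i = card {k. k < i \<and> w!k = b}"
proof -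
  assume i: "i \<le> length w"
  have "rk b w i = card {k. k < length (take i w) \<and> take i w ! k = b}"
    unfolding rk_def by (rule length_filter_conv_card)
  also have "{k. k < length (take i w) \<and> take i w ! k = b} = {k. k < i \<and> w!k = b}"
    using i by auto
  finally show ?thesis .
qed

lemma restr_key:
  assumes lw: "length w = n" and X: "X = Suc ` {i. i < n \<and> w!i = b}" and i: "i < n" "w!i = b"
  shows "rk b w i < card X \<and> sorted_list_of_set X ! (rk b w i) = Suc i"
proof -
  have finX: "finite X" using X by simp
  let ?Xs = "sorted_list_of_set X"
  have "Suc i \<in> X" using X i by auto
  then obtain a where a: "a < length ?Xs" "?Xs ! a = Suc i" using finX by (metis in_set_conv_nth set_sorted_list_of_set)
  have "card {y \<in> set ?Xs. y < ?Xs ! a} = a" using sorted_idx[OF strict_sorted_list_of_set a(1)] .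
  then have ca: "card {y \<in> X. y < Suc i} = a" using a finX by simp
  have "{y \<in> X. y < Suc i} = Suc ` {k. k < i \<and> w!k = b}" using X i by auto
  then have "card {y \<in> X. y < Suc i} = card {k. k < i \<and> w!k = b}" by (simp add: card_image)
  also have "\<dots> = rk b w i" using rk_card[of i w b] i lw by simp
  finally have "rk b w i = a" using ca by simp
  then show ?thesis using a by simp
qed

lemma restr_equiv:
  assumes lw: "length w = n" and X: "X = Suc ` {i. i < n \<and> w!i = b}"
    and Ar: "\<And>i j. (i,j) \<in> Ar \<Longrightarrow> i < j \<and> j < n"
  shows "{(a,c). a < c \<and> c < card X \<and> (sorted_list_of_set X ! a - 1, sorted_list_of_set X ! c - 1) \<in> Ar} \<subseteq> S
    \<longleftrightarrow> (\<forall>i j. (i,j) \<in> Ar \<longrightarrow> w!i = b \<longrightarrow> w!j = b \<longrightarrow> (rk b w i, rk b w j) \<in> S)"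
proof -
  have finX: "finite X" using X by simp
  let ?Xs = "sorted_list_of_set X"
  have K2: "\<exists>i. i < n \<and> w!i = b \<and> rk b w i = a \<and> ?Xs ! a = Suc i" if a: "a < card X" for a
  proof -
    have "?Xs ! a \<in> X" using sorted_list_nth_mem[OF finX a] .
    then obtain i where i: "i < n" "w!i = b" "?Xs ! a = Suc i" using X by auto
    have k: "rk b w i < card X" "?Xs ! (rk b w i) = Suc i" using restr_key[OF lw X i(1,2)] by auto
    have "rk b w i = a"
      using k a i(3) nth_eq_iff_index_eq[of ?Xs "rk b w i" a] finX by simp
    then show ?thesis using i by blast
  qed
  show ?thesis
  proof
    assume H: "{(a,c). a < c \<and> c < card X \<and> (?Xs ! a - 1, ?Xs ! c - 1) \<in> Ar} \<subseteq> S"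
    show "\<forall>i j. (i,j) \<in> Ar \<longrightarrow> w!i = b \<longrightarrow> w!j = b \<longrightarrow> (rk b w i, rk b w j) \<in> S"
    proof (intro allI impI)
      fix i j assume ij: "(i,j) \<in> Ar" "w!i = b" "w!j = b"
      have b: "i < j" "j < n" using Ar[OF ij(1)] by auto
      have ki: "rk b w i < card X" "?Xs ! (rk b w i) = Suc i" using restr_key[OF lw X _ ij(2)] b by auto
      have kj: "rk b w j < card X" "?Xs ! (rk b w j) = Suc j" using restr_key[OF lw X _ ij(3)] b by auto
      have "rk b w i < rk b w j"
      proof (rule ccontr)
        assume "\<not> rk b w i < rk b w j"
        then have "rk b w j < rk b w i \<or> rk b w j = rk b w i" by auto
        then have "?Xs ! (rk b w j) \<le> ?Xs ! (rk b w i)"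
          using sorted_list_nth_less[OF finX, of "rk b w j" "rk b w i"] ki by auto
        then show False using ki kj b by simp
      qed
      then show "(rk b w i, rk b w j) \<in> S" using H ki kj ij(1) by auto
    qed
  next
    assume H: "\<forall>i j. (i,j) \<in> Ar \<longrightarrow> w!i = b \<longrightarrow> w!j = b \<longrightarrow> (rk b w i, rk b w j) \<in> S"
    show "{(a,c). a < c \<and> c < card X \<and> (?Xs ! a - 1, ?Xs ! c - 1) \<in> Ar} \<subseteq> S"
    proof
      fix x assume "x \<in> {(a,c). a < c \<and> c < card X \<and> (?Xs ! a - 1, ?Xs ! c - 1) \<in> Ar}"
      then obtain a c where x: "x = (a,c)" "a < c" "c < card X" "(?Xs ! a - 1, ?Xs ! c - 1) \<in> Ar" by auto
      obtain i where i: "i < n" "w!i = b" "rk b w i = a" "?Xs ! a = Suc i" using K2[of a] x by auto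
      obtain j where j: "j < n" "w!j = b" "rk b w j = c" "?Xs ! c = Suc j" using K2[of c] x by auto
      have "(i,j) \<in> Ar" using x i j by simp
      then show "x \<in> S" using H i j x by auto
    qed
  qed
qed

definition Rof :: "bool list \<Rightarrow> nat set" where
  "Rof w = Suc ` {i. i < length w \<and> w!i = False}"

definition Rset :: "nat \<Rightarrow> nat \<Rightarrow> nat set set" where
  "Rset n p = {R. R \<subseteq> {1..n} \<and> card R = p}"

lemma Rof_compl: "{1..length w} - Rof w = Suc ` {i. i < length w \<and> w!i = True}"
  unfolding Rof_def by (auto simp: image_iff) (metis Suc_le_D Suc_le_lessD le_eq_less_or_eq less_Suc_eq_le)

lemma card_Suc_image: "card (Suc ` A) = card A"
  by (simp add: card_image)

lemma Wset_card: "w \<in> Wset p q \<Longrightarrow> card {i. i < length w \<and> w!i = False} = p \<and> card {i. i < length w \<and> w!i = True} = q"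
proof -
  assume w: "w \<in> Wset p q"
  have c: "rk True w (length w) = q" "rk False w (length w) = p" using Wset_counts[OF w] by auto
  have "rk False w (length w) = card {i. i < length w \<and> w!i = False}" by (rule rk_card) simp
  moreover have "rk True w (length w) = card {i. i < length w \<and> w!i = True}" by (rule rk_card) simp
  ultimately show ?thesis using c by simp
qed

lemma Rof_bij: "bij_betw Rof (Wset p q) (Rset (p + q) p)"
proof (rule bij_betw_byWitness[where f' = "\<lambda>R. map (\<lambda>i. Suc i \<notin> R) [0..<p + q]"])
  show "\<forall>w\<in>Wset p q. map (\<lambda>i. Suc i \<notin> Rof w) [0..<p + q] = w"
  proof
    fix w assume w: "w \<in> Wset p q"
    then have lw: "length w = p + q" by (simp add: Wset_def)
    have "map (\<lambda>i. Suc i \<notin> Rof w) [0..<p + q] = map (\<lambda>i. w ! i) [0..<length w]"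
      using lw by (auto simp: Rof_def)
    then show "map (\<lambda>i. Suc i \<notin> Rof w) [0..<p + q] = w" by (simp add: map_nth)
  qed
next
  show "\<forall>R\<in>Rset (p + q) p. Rof (map (\<lambda>i. Suc i \<notin> R) [0..<p + q]) = R"
  proof
    fix R assume R: "R \<in> Rset (p + q) p"
    then have Rs: "R \<subseteq> {1..p+q}" by (simp add: Rset_def)
    show "Rof (map (\<lambda>i. Suc i \<notin> R) [0..<p + q]) = R"
    proof
      show "Rof (map (\<lambda>i. Suc i \<notin> R) [0..<p + q]) \<subseteq> R" by (auto simp: Rof_def)
      show "R \<subseteq> Rof (map (\<lambda>i. Suc i \<notin> R) [0..<p + q])"
      proof
        fix x assume x: "x \<in> R"
        then have "1 \<le> x" "x \<le> p + q" using Rs by auto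
        then have "x = Suc (x - 1)" "x - 1 < p + q" by auto
        then show "x \<in> Rof (map (\<lambda>i. Suc i \<notin> R) [0..<p + q])" using x unfolding Rof_def
          by (auto simp: image_iff intro!: bexI[of _ "x - 1"])
      qed
    qed
  qed
next
  show "Rof ` Wset p q \<subseteq> Rset (p + q) p"
  proof
    fix R assume "R \<in> Rof ` Wset p q"
    then obtain w where w: "w \<in> Wset p q" "R = Rof w" by auto
    have lw: "length w = p + q" using w by (simp add: Wset_def)
    have "R \<subseteq> {1..p+q}" using w lw by (auto simp: Rof_def)
    moreover have "card R = p" using w Wset_card[OF w(1)] by (simp add: Rof_def card_Suc_image)
    ultimately show "R \<in> Rset (p + q) p" by (simp add: Rset_def)
  qed
next
  show "(\<lambda>R. map (\<lambda>i. Suc i \<notin> R) [0..<p + q]) ` Rset (p + q) p \<subseteq> Wset p q"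
  proof
    fix w assume "w \<in> (\<lambda>R. map (\<lambda>i. Suc i \<notin> R) [0..<p + q]) ` Rset (p + q) p"
    then obtain R where R: "R \<in> Rset (p + q) p" "w = map (\<lambda>i. Suc i \<notin> R) [0..<p + q]" by auto
    have Rs: "R \<subseteq> {1..p+q}" "card R = p" using R by (auto simp: Rset_def)
    have lw: "length w = p + q" using R by simp
    have "Suc ` {i. i < length w \<and> w!i = False} = R"
    proof
      show "Suc ` {i. i < length w \<and> w!i = False} \<subseteq> R" using R by auto
      show "R \<subseteq> Suc ` {i. i < length w \<and> w!i = False}"
      proof
        fix x assume x: "x \<in> R"
        then have "1 \<le> x" "x \<le> p + q" using Rs by auto
        then have "x = Suc (x - 1)" "x - 1 < p + q" by auto
        then show "x \<in> Suc ` {i. i < length w \<and> w!i = False}" using x R lw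
          by (auto simp: image_iff intro!: bexI[of _ "x - 1"])
      qed
    qed
    then have cF: "card {i. i < length w \<and> w!i = False} = p" using Rs card_Suc_image by metis
    have "length (filter id w) + length (filter (\<lambda>x. \<not> id x) w) = length w" by (rule sum_length_filter_compl)
    moreover have "length (filter (\<lambda>x. \<not> id x) w) = card {i. i < length w \<and> w!i = False}"
      by (simp add: length_filter_conv_card)
    ultimately have "length (filter id w) = q" using cF lw by simp
    then show "w \<in> Wset p q" using lw by (simp add: Wset_def)
  qed
qed

lemma cond_equiv:
  assumes w: "w \<in> Wset p q" and nr: "nodes r = p + q" and ns: "nodes s' = p" and nt: "nodes t' = q"
  shows "Aset r \<subseteq> Nw w (Aset s') (Aset t') \<longleftrightarrow>
    tamari_le (lam (piR (p + q) (Rof w))) r \<and> tamari_le s' (tree_restr r (Rof w)) \<and>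
    tamari_le t' (tree_restr r ({1..p + q} - Rof w))"
proof -
  let ?n = "p + q" and ?R = "Rof w"
  have lw: "length w = ?n" using w by (simp add: Wset_def)
  have Ab: "(i,j) \<in> Aset r \<Longrightarrow> i < j \<and> j < ?n" for i j using Aset_bound[of i j r] nr by simp
  have RX: "?R = Suc ` {i. i < ?n \<and> w!i = False}" using lw by (simp add: Rof_def)
  have CX: "{1..?n} - ?R = Suc ` {i. i < ?n \<and> w!i = True}" using Rof_compl[of w] lw by simp
  have Rsub: "?R \<subseteq> {1..?n}" using RX by auto
  have Csub: "{1..?n} - ?R \<subseteq> {1..nodes r}" using nr by auto
  have cR: "card ?R = p" using Wset_card[OF w] RX lw by (simp add: card_Suc_image)
  have cC: "card ({1..?n} - ?R) = q" using Wset_card[OF w] CX lw by (simp add: card_Suc_image)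
  have memR: "i < ?n \<Longrightarrow> Suc i \<in> ?R \<longleftrightarrow> \<not> w!i" for i using RX by auto
  have E0: "Aset r \<subseteq> Nw w (Aset s') (Aset t') \<longleftrightarrow>
     (\<forall>i j. (i,j) \<in> Aset r \<longrightarrow> \<not> (w!i \<and> \<not> w!j)) \<and>
     (\<forall>i j. (i,j) \<in> Aset r \<longrightarrow> w!i = False \<longrightarrow> w!j = False \<longrightarrow> (rk False w i, rk False w j) \<in> Aset s') \<and>
     (\<forall>i j. (i,j) \<in> Aset r \<longrightarrow> w!i = True \<longrightarrow> w!j = True \<longrightarrow> (rk True w i, rk True w j) \<in> Aset t')"
  proof -
    have pt: "(i,j) \<in> Nw w (Aset s') (Aset t') \<longleftrightarrow> \<not> (w!i \<and> \<not> w!j) \<and>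
        (w!i = False \<longrightarrow> w!j = False \<longrightarrow> (rk False w i, rk False w j) \<in> Aset s') \<and>
        (w!i = True \<longrightarrow> w!j = True \<longrightarrow> (rk True w i, rk True w j) \<in> Aset t')"
      if "(i,j) \<in> Aset r" for i j
      using Ab[OF that] lw unfolding Nw_def by (cases "w!i"; cases "w!j") auto
    show ?thesis
    proof
      assume H: "Aset r \<subseteq> Nw w (Aset s') (Aset t')"
      show "(\<forall>i j. (i,j) \<in> Aset r \<longrightarrow> \<not> (w!i \<and> \<not> w!j)) \<and>
     (\<forall>i j. (i,j) \<in> Aset r \<longrightarrow> w!i = False \<longrightarrow> w!j = False \<longrightarrow> (rk False w i, rk False w j) \<in> Aset s') \<and>
     (\<forall>i j. (i,j) \<in> Aset r \<longrightarrow> w!i = True \<longrightarrow> w!j = True \<longrightarrow> (rk True w i, rk True w j) \<in> Aset t')"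
      proof (intro conjI allI impI)
        fix i j assume ij: "(i,j) \<in> Aset r"
        then have "(i,j) \<in> Nw w (Aset s') (Aset t')" using H by blast
        then have P: "\<not> (w!i \<and> \<not> w!j) \<and>
          (w!i = False \<longrightarrow> w!j = False \<longrightarrow> (rk False w i, rk False w j) \<in> Aset s') \<and>
          (w!i = True \<longrightarrow> w!j = True \<longrightarrow> (rk True w i, rk True w j) \<in> Aset t')" using pt[OF ij] by blast
        show "\<not> (w!i \<and> \<not> w!j)" using P by blast
        { assume "w!i = False" "w!j = False" then show "(rk False w i, rk False w j) \<in> Aset s'" using P by blast }
        { assume "w!i = True" "w!j = True" then show "(rk True w i, rk True w j) \<in> Aset t'" using P by blast }
      qed
    next
      assume H: "(\<forall>i j. (i,j) \<in> Aset r \<longrightarrow> \<not> (w!i \<and> \<not> w!j)) \<and>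
     (\<forall>i j. (i,j) \<in> Aset r \<longrightarrow> w!i = False \<longrightarrow> w!j = False \<longrightarrow> (rk False w i, rk False w j) \<in> Aset s') \<and>
     (\<forall>i j. (i,j) \<in> Aset r \<longrightarrow> w!i = True \<longrightarrow> w!j = True \<longrightarrow> (rk True w i, rk True w j) \<in> Aset t')"
      show "Aset r \<subseteq> Nw w (Aset s') (Aset t')"
      proof
        fix x assume x: "x \<in> Aset r"
        obtain i j where ij: "x = (i,j)" by (cases x)
        have "(i,j) \<in> Aset r" using x ij by simp
        then show "x \<in> Nw w (Aset s') (Aset t')" using pt[of i j] H ij by blast
      qed
    qed
  qed
  have E1: "tamari_le (lam (piR ?n ?R)) r \<longleftrightarrow> (\<forall>i j. (i,j) \<in> Aset r \<longrightarrow> \<not> (w!i \<and> \<not> w!j))"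
  proof -
    have pp: "length (piR ?n ?R) = ?n" "distinct (piR ?n ?R)"
      "NI (piR ?n ?R) = {(i,j). i < j \<and> j < ?n \<and> \<not> (Suc i \<notin> ?R \<and> Suc j \<in> ?R)}"
      using piR_props[OF Rsub] by auto
    have "tamari_le (lam (piR ?n ?R)) r \<longleftrightarrow> Aset r \<subseteq> NI (piR ?n ?R)"
      using tamari_lam_le[OF pp(2), of r] pp(1) nr by simp
    also have "\<dots> \<longleftrightarrow> (\<forall>i j. (i,j) \<in> Aset r \<longrightarrow> \<not> (w!i \<and> \<not> w!j))"
    proof
      assume H: "Aset r \<subseteq> NI (piR ?n ?R)"
      show "\<forall>i j. (i,j) \<in> Aset r \<longrightarrow> \<not> (w!i \<and> \<not> w!j)"
      proof (intro allI impI)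
        fix i j assume ij: "(i,j) \<in> Aset r"
        then have "\<not> (Suc i \<notin> ?R \<and> Suc j \<in> ?R)" using H pp(3) by auto
        then show "\<not> (w!i \<and> \<not> w!j)" using memR[of i] memR[of j] Ab[OF ij] by auto
      qed
    next
      assume H: "\<forall>i j. (i,j) \<in> Aset r \<longrightarrow> \<not> (w!i \<and> \<not> w!j)"
      show "Aset r \<subseteq> NI (piR ?n ?R)"
      proof
        fix x assume x: "x \<in> Aset r"
        obtain i j where ij: "x = (i,j)" by (cases x)
        have m: "(i,j) \<in> Aset r" using x ij by simp
        then have "\<not> (w!i \<and> \<not> w!j)" using H by blast
        then have "\<not> (Suc i \<notin> ?R \<and> Suc j \<in> ?R)" using memR[of i] memR[of j] Ab[OF m] by auto
        then show "x \<in> NI (piR ?n ?R)" using pp(3) Ab[OF m] ij by simp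
      qed
    qed
    finally show ?thesis .
  qed
  have E2: "tamari_le s' (tree_restr r ?R) \<longleftrightarrow>
     (\<forall>i j. (i,j) \<in> Aset r \<longrightarrow> w!i = False \<longrightarrow> w!j = False \<longrightarrow> (rk False w i, rk False w j) \<in> Aset s')"
  proof -
    have tp: "nodes (tree_restr r ?R) = card ?R \<and>
      Aset (tree_restr r ?R) = {(a,b). a < b \<and> b < card ?R \<and>
        (sorted_list_of_set ?R ! a - 1, sorted_list_of_set ?R ! b - 1) \<in> Aset r}"
      using tree_restr_props[of ?R r] Rsub nr by simp
    have "tamari_le s' (tree_restr r ?R) \<longleftrightarrow> Aset (tree_restr r ?R) \<subseteq> Aset s'"
      using tamari_le_iff[of s' "tree_restr r ?R"] tp cR ns by simp
    also have "\<dots> \<longleftrightarrow> (\<forall>i j. (i,j) \<in> Aset r \<longrightarrow> w!i = False \<longrightarrow> w!j = False \<longrightarrow> (rk False w i, rk False w j) \<in> Aset s')"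
      using tp restr_equiv[where Ar="Aset r" and S="Aset s'", OF lw RX Ab] by simp
    finally show ?thesis .
  qed
  have E3: "tamari_le t' (tree_restr r ({1..?n} - ?R)) \<longleftrightarrow>
     (\<forall>i j. (i,j) \<in> Aset r \<longrightarrow> w!i = True \<longrightarrow> w!j = True \<longrightarrow> (rk True w i, rk True w j) \<in> Aset t')"
  proof -
    let ?C = "{1..?n} - ?R"
    have tp: "nodes (tree_restr r ?C) = card ?C \<and>
      Aset (tree_restr r ?C) = {(a,b). a < b \<and> b < card ?C \<and>
        (sorted_list_of_set ?C ! a - 1, sorted_list_of_set ?C ! b - 1) \<in> Aset r}"
      using tree_restr_props[of ?C r] Csub by simp
    have "tamari_le t' (tree_restr r ?C) \<longleftrightarrow> Aset (tree_restr r ?C) \<subseteq> Aset t'"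
      using tamari_le_iff[of t' "tree_restr r ?C"] tp cC nt by simp
    also have "\<dots> \<longleftrightarrow> (\<forall>i j. (i,j) \<in> Aset r \<longrightarrow> w!i = True \<longrightarrow> w!j = True \<longrightarrow> (rk True w i, rk True w j) \<in> Aset t')"
      using tp restr_equiv[where Ar="Aset r" and S="Aset t'", OF lw CX Ab] by simp
    finally show ?thesis .
  qed
  show ?thesis using E0 E1 E2 E3 by simp
qed



lemma bij_card_filter: "bij_betw g A B \<Longrightarrow> card {x \<in> A. P (g x)} = card {y \<in> B. P y}"
proof -
  assume b: "bij_betw g A B"
  have "g ` {x \<in> A. P (g x)} = {y \<in> B. P y}" using b by (auto simp: bij_betw_def)
  moreover have "inj_on g {x \<in> A. P (g x)}" using b by (auto simp: bij_betw_def inj_on_def)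
  ultimately show ?thesis by (metis card_image)
qed

lemma finite_Sset: "finite (Sset p q)"
proof -
  have "Sset p q \<subseteq> {xs. set xs \<subseteq> {0..p} \<and> length xs = q}" by (auto simp: Sset_def)
  moreover have "finite {xs. set xs \<subseteq> {0..p} \<and> length xs = q}" by (rule finite_lists_length_eq) simp
  ultimately show ?thesis using finite_subset by blast
qed

lemma prodF_eq: "prodF s' t' u = of_nat (card {is \<in> Sset (nodes s') (nodes t'). graft t' (divide s' is) = u})"
  unfolding prodF_def Sset_def by (simp add: conj_assoc)

lemma count_prod:
  assumes nr: "nodes r = n" and ns: "nodes s' = p" and nt: "nodes t' = q" and pq: "p + q = n"
  shows "(\<Sum>u\<in>{u. tamari_le u r}. prodF s' t' u) =
    of_nat (card {R \<in> Rset n p. tamari_le (lam (piR n R)) r \<and> tamari_le s' (tree_restr r R) \<and>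
       tamari_le t' (tree_restr r ({1..n} - R))})"
proof -
  let ?S = "Sset p q" and ?f = "\<lambda>is. graft t' (divide s' is)" and ?U = "{u. tamari_le u r}"
  let ?C = "\<lambda>R. tamari_le (lam (piR n R)) r \<and> tamari_le s' (tree_restr r R) \<and> tamari_le t' (tree_restr r ({1..n} - R))"
  have finU: "finite ?U" using finite_down[of r "\<lambda>_. True"] by simp
  have finS: "finite ?S" by (rule finite_Sset)
  have "(\<Sum>u\<in>?U. prodF s' t' u) = (\<Sum>u\<in>?U. of_nat (card {is \<in> ?S. ?f is = u}))"
    using ns nt by (simp add: prodF_eq)
  also have "\<dots> = of_nat (\<Sum>u\<in>?U. card {is \<in> ?S. ?f is = u})" by simp
  also have "(\<Sum>u\<in>?U. card {is \<in> ?S. ?f is = u}) = card (\<Union>u\<in>?U. {is \<in> ?S. ?f is = u})"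
    by (rule card_UN_disjoint[symmetric]) (use finU finS in auto)
  also have "(\<Union>u\<in>?U. {is \<in> ?S. ?f is = u}) = {is \<in> ?S. tamari_le (?f is) r}" by auto
  also have "{is \<in> ?S. tamari_le (?f is) r} = {is \<in> ?S. ?C (Rof (wd p is))}"
  proof (rule Collect_cong)
    fix "is"
    show "(is \<in> ?S \<and> tamari_le (?f is) r) \<longleftrightarrow> (is \<in> ?S \<and> ?C (Rof (wd p is)))"
    proof (cases "is \<in> ?S")
      case True
      have gd: "nodes (?f is) = p + q \<and> Aset (?f is) = Kc (Nw (wd p is) (Aset s') (Aset t')) (p + q)"
        using graft_divide[of "is" s' t'] True ns nt by simp
      have "tamari_le (?f is) r \<longleftrightarrow> Aset r \<subseteq> Aset (?f is)"
        using tamari_le_iff[of "?f is" r] gd nr pq by simp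
      also have "\<dots> \<longleftrightarrow> Aset r \<subseteq> Nw (wd p is) (Aset s') (Aset t')"
        using gd Aset_sub_Kc[of r "p + q"] nr pq by simp
      also have "\<dots> \<longleftrightarrow> ?C (Rof (wd p is))"
        using cond_equiv[OF wd_in_Wset[OF True], of r s' t'] nr ns nt pq by simp
      finally show ?thesis using True by simp
    qed simp
  qed
  also have "card {is \<in> ?S. ?C (Rof (wd p is))} = card {R \<in> Rset n p. ?C R}"
  proof -
    have "bij_betw (Rof \<circ> wd p) ?S (Rset (p + q) p)" using wd_bij Rof_bij by (rule bij_betw_trans)
    then show ?thesis using bij_card_filter[of "Rof \<circ> wd p" ?S "Rset (p + q) p" ?C] pq by simp
  qed
  finally show ?thesis .
qed

lemma mob_delta:
  assumes "nodes X = nodes s"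
  shows "(\<Sum>s'\<in>Ytrees (nodes s). Mvec s s' * (if tamari_le s' X then 1 else 0)) = (if s = X then 1 else 0)"
proof -
  let ?Y = "Ytrees (nodes s)" and ?I = "{u. tamari_le s u \<and> tamari_le u X}"
  have finY: "finite ?Y" by (rule finite_Ytrees)
  have sub: "?I \<subseteq> ?Y" using tamari_le_nodes by (auto simp: Ytrees_def)
  have "(\<Sum>s'\<in>?Y. Mvec s s' * (if tamari_le s' X then 1 else 0)) = (\<Sum>s'\<in>?I. Mvec s s' * (if tamari_le s' X then 1 else 0))"
  proof (rule sum.mono_neutral_right[OF finY sub, symmetric, THEN sym])
    show "\<forall>i\<in>?Y - ?I. Mvec s i * (if tamari_le i X then 1 else 0) = 0"
      using mob_nonle by (auto simp: Mvec_eq)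
  qed
  also have "\<dots> = (\<Sum>s'\<in>?I. of_int (mob s s'))" by (intro sum.cong) (auto simp: Mvec_eq)
  also have "\<dots> = of_int (\<Sum>s'\<in>?I. mob s s')" by simp
  also have "\<dots> = (if s = X then 1 else 0)"
  proof (cases "tamari_le s X")
    case True then show ?thesis using mob_sum[OF True] by simp
  next
    case False
    then have e: "?I = {}" using tamari_le_trans by blast
    have "s \<noteq> X" using False by auto
    then show ?thesis unfolding e by simp
  qed
  finally show ?thesis .
qed

lemma prod_zero:
  assumes "nodes r = n" "nodes s' + nodes t' \<noteq> n"
  shows "(\<Sum>u\<in>{u. tamari_le u r}. prodF s' t' u) = 0"
proof (rule sum.neutral, rule ballI)
  fix u assume "u \<in> {u. tamari_le u r}"
  then have nu: "nodes u = n" using tamari_le_nodes assms(1) by fastforce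
  have E: "{is \<in> Sset (nodes s') (nodes t'). graft t' (divide s' is) = u} = {}"
  proof (rule equals0I)
    fix "is" assume H: "is \<in> {is \<in> Sset (nodes s') (nodes t'). graft t' (divide s' is) = u}"
    then have "nodes (graft t' (divide s' is)) = nodes s' + nodes t'" using graft_divide by blast
    then show False using H nu assms(2) by simp
  qed
  show "prodF s' t' u = 0" unfolding prodF_eq E by simp
qed

lemma card_filter_sum: "finite A \<Longrightarrow> (of_nat (card {x \<in> A. P x}) :: rat) = (\<Sum>x\<in>A. if P x then 1 else 0)"
proof -
  assume fA: "finite A"
  have "card {x \<in> A. P x} = (\<Sum>x\<in>{x \<in> A. P x}. (1::nat))" by simp
  then have "(of_nat (card {x \<in> A. P x}) :: rat) = (\<Sum>x\<in>{x \<in> A. P x}. (1::rat))" by simp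
  also have "\<dots> = (\<Sum>x\<in>A. if P x then 1 else 0)" using fA by (rule sum.inter_filter)
  finally show ?thesis .
qed

lemma finite_Rset: "finite (Rset n p)"
proof -
  have "Rset n p \<subseteq> Pow {1..n}" by (auto simp: Rset_def)
  then show ?thesis using finite_subset by blast
qed

lemma sum_prod3: "(\<Sum>x\<in>A. \<Sum>y\<in>B. (a::rat) * f x * g y) = a * sum f A * sum g B"
proof -
  have "a * sum f A * sum g B = a * (sum f A * sum g B)" by (simp add: mult.assoc)
  also have "\<dots> = a * (\<Sum>x\<in>A. \<Sum>y\<in>B. f x * g y)" by (simp add: sum_product)
  also have "\<dots> = (\<Sum>x\<in>A. \<Sum>y\<in>B. a * (f x * g y))" by (simp add: sum_distrib_left)
  finally show ?thesis by (simp add: mult.assoc)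
qed

lemma LHS_expand:
  "LR_coprod_M r (s, t) = (\<Sum>s'\<in>Ytrees (nodes s). \<Sum>t'\<in>Ytrees (nodes t).
      Mvec s s' * Mvec t t' * (\<Sum>u\<in>{u. tamari_le u r}. prodF s' t' u))"
proof -
  let ?U = "{u. tamari_le u r}" and ?A = "Ytrees (nodes s)" and ?B = "Ytrees (nodes t)"
  have "LR_coprod_M r (s, t) = (\<Sum>u\<in>?U. prodM s t u)" by (simp add: LR_coprod_M_def Mcoord_eq)
  also have "\<dots> = (\<Sum>u\<in>?U. \<Sum>s'\<in>?A. \<Sum>t'\<in>?B. Mvec s s' * Mvec t t' * prodF s' t' u)"
    by (simp add: prodM_def)
  also have "\<dots> = (\<Sum>s'\<in>?A. \<Sum>u\<in>?U. \<Sum>t'\<in>?B. Mvec s s' * Mvec t t' * prodF s' t' u)"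
    by (rule sum.swap)
  also have "\<dots> = (\<Sum>s'\<in>?A. \<Sum>t'\<in>?B. \<Sum>u\<in>?U. Mvec s s' * Mvec t t' * prodF s' t' u)"
    by (rule sum.cong[OF refl], rule sum.swap)
  also have "\<dots> = (\<Sum>s'\<in>?A. \<Sum>t'\<in>?B. Mvec s s' * Mvec t t' * (\<Sum>u\<in>?U. prodF s' t' u))"
    by (simp add: sum_distrib_left)
  finally show ?thesis .
qed

lemma tree_restr_nodes: "R \<subseteq> {1..nodes r} \<Longrightarrow> nodes (tree_restr r R) = card R"
  using tree_restr_props by blast

theorem theorem8p6:
  fixes r :: tree and n :: nat
  assumes "r \<in> Ytrees n"
  shows "LR_coprod_M r =
    (\<lambda>(s, t). \<Sum>R\<in>{R. R \<subseteq> {1..n} \<and> tamari_le (lam (piR n R)) r}.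
        (if tree_restr r R = s \<and> tree_restr r ({1..n} - R) = t then 1 else 0))"
proof (rule ext)
  fix x :: "tree \<times> tree"
  obtain s t where x: "x = (s, t)" by (cases x)
  have nr: "nodes r = n" using assms by (simp add: Ytrees_def)
  let ?p = "nodes s" and ?q = "nodes t"
  let ?U = "{u. tamari_le u r}" and ?A = "Ytrees (nodes s)" and ?B = "Ytrees (nodes t)"
  let ?C1 = "\<lambda>R. tamari_le (lam (piR n R)) r"
  define G where "G R = (if tree_restr r R = s \<and> tree_restr r ({1..n} - R) = t then (1::rat) else 0)" for R
  have rhs: "(\<lambda>(s, t). \<Sum>R\<in>{R. R \<subseteq> {1..n} \<and> tamari_le (lam (piR n R)) r}.
        (if tree_restr r R = s \<and> tree_restr r ({1..n} - R) = t then (1::rat) else 0)) x =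
      (\<Sum>R\<in>{R. R \<subseteq> {1..n} \<and> ?C1 R}. G R)"
    using x by (simp add: G_def)
  have GR: "G R \<noteq> 0 \<Longrightarrow> R \<subseteq> {1..n} \<Longrightarrow> card R = ?p \<and> n - card R = ?q" for R
  proof -
    assume G: "G R \<noteq> 0" and R: "R \<subseteq> {1..n}"
    then have e: "tree_restr r R = s" "tree_restr r ({1..n} - R) = t" by (auto simp: G_def split: if_splits)
    have fin: "finite R" using R finite_subset by blast
    have "card ({1..n} - R) = n - card R" using R fin by (simp add: card_Diff_subset)
    then show ?thesis using e tree_restr_nodes[of R r] tree_restr_nodes[of "{1..n} - R" r] R nr by auto
  qed
  show "LR_coprod_M r x = (\<lambda>(s, t). \<Sum>R\<in>{R. R \<subseteq> {1..n} \<and> tamari_le (lam (piR n R)) r}.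
        (if tree_restr r R = s \<and> tree_restr r ({1..n} - R) = t then 1 else 0)) x"
  proof (cases "?p + ?q = n")
    case False
    have "LR_coprod_M r (s,t) = 0"
      unfolding LHS_expand
    proof (intro sum.neutral ballI)
      fix s' t' assume s': "s' \<in> ?A" and t': "t' \<in> ?B"
      have "nodes s' + nodes t' \<noteq> n" using s' t' False by (simp add: Ytrees_def)
      then show "Mvec s s' * Mvec t t' * (\<Sum>u\<in>?U. prodF s' t' u) = 0" using prod_zero[OF nr] by simp
    qed
    moreover have "(\<Sum>R\<in>{R. R \<subseteq> {1..n} \<and> ?C1 R}. G R) = 0"
    proof (intro sum.neutral ballI)
      fix R assume "R \<in> {R. R \<subseteq> {1..n} \<and> ?C1 R}"
      then have R: "R \<subseteq> {1..n}" by simp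
      have "card R \<le> n" using R card_mono[of "{1..n}" R] by simp
      then show "G R = 0" using GR[OF _ R] False by fastforce
    qed
    ultimately show ?thesis using rhs x by simp
  next
    case True
    let ?Rs = "Rset n ?p"
    let ?X = "\<lambda>R. tree_restr r R" and ?Y = "\<lambda>R. tree_restr r ({1..n} - R)"
    define ind where "ind R s' t' = (if ?C1 R then (1::rat) else 0) * (if tamari_le s' (?X R) then 1 else 0) *
        (if tamari_le t' (?Y R) then 1 else 0)" for R s' t'
    have finRs: "finite ?Rs" by (rule finite_Rset)
    have inner: "(\<Sum>u\<in>?U. prodF s' t' u) = (\<Sum>R\<in>?Rs. ind R s' t')" if s': "s' \<in> ?A" and t': "t' \<in> ?B" for s' t'
    proof -
      have ns: "nodes s' = ?p" and nt: "nodes t' = ?q" using s' t' by (auto simp: Ytrees_def)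
      have "(\<Sum>u\<in>?U. prodF s' t' u) = of_nat (card {R \<in> ?Rs. ?C1 R \<and> tamari_le s' (?X R) \<and> tamari_le t' (?Y R)})"
        using count_prod[OF nr ns nt True] .
      also have "\<dots> = (\<Sum>R\<in>?Rs. if ?C1 R \<and> tamari_le s' (?X R) \<and> tamari_le t' (?Y R) then 1 else 0)"
        using finRs by (rule card_filter_sum)
      also have "\<dots> = (\<Sum>R\<in>?Rs. ind R s' t')" by (intro sum.cong) (auto simp: ind_def)
      finally show ?thesis .
    qed
    have "LR_coprod_M r (s,t) = (\<Sum>s'\<in>?A. \<Sum>t'\<in>?B. Mvec s s' * Mvec t t' * (\<Sum>R\<in>?Rs. ind R s' t'))"
      unfolding LHS_expand using inner by (intro sum.cong) auto
    also have "\<dots> = (\<Sum>s'\<in>?A. \<Sum>t'\<in>?B. \<Sum>R\<in>?Rs. (if ?C1 R then 1 else 0) *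
        (Mvec s s' * (if tamari_le s' (?X R) then 1 else 0)) * (Mvec t t' * (if tamari_le t' (?Y R) then 1 else 0)))"
      by (intro sum.cong refl) (simp add: sum_distrib_left ind_def ac_simps)
    also have "\<dots> = (\<Sum>s'\<in>?A. \<Sum>R\<in>?Rs. \<Sum>t'\<in>?B. (if ?C1 R then 1 else 0) *
        (Mvec s s' * (if tamari_le s' (?X R) then 1 else 0)) * (Mvec t t' * (if tamari_le t' (?Y R) then 1 else 0)))"
      by (rule sum.cong[OF refl], rule sum.swap)
    also have "\<dots> = (\<Sum>R\<in>?Rs. \<Sum>s'\<in>?A. \<Sum>t'\<in>?B. (if ?C1 R then 1 else 0) *
        (Mvec s s' * (if tamari_le s' (?X R) then 1 else 0)) * (Mvec t t' * (if tamari_le t' (?Y R) then 1 else 0)))"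
      by (rule sum.swap)
    also have "\<dots> = (\<Sum>R\<in>?Rs. (if ?C1 R then 1 else 0) *
        (\<Sum>s'\<in>?A. Mvec s s' * (if tamari_le s' (?X R) then 1 else 0)) *
        (\<Sum>t'\<in>?B. Mvec t t' * (if tamari_le t' (?Y R) then 1 else 0)))"
      by (rule sum.cong[OF refl], rule sum_prod3)
    also have "\<dots> = (\<Sum>R\<in>?Rs. (if ?C1 R then 1 else 0) * (if s = ?X R then 1 else 0) * (if t = ?Y R then 1 else 0))"
    proof (intro sum.cong refl)
      fix R assume R: "R \<in> ?Rs"
      have Rs: "R \<subseteq> {1..n}" "card R = ?p" using R by (auto simp: Rset_def)
      have fin: "finite R" using Rs finite_subset by blast
      have "card ({1..n} - R) = n - card R" using Rs fin by (simp add: card_Diff_subset)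
      then have nX: "nodes (?X R) = ?p" and nY: "nodes (?Y R) = ?q"
        using tree_restr_nodes[of R r] tree_restr_nodes[of "{1..n} - R" r] Rs nr True by auto
      show "(if ?C1 R then 1 else 0) *
        (\<Sum>s'\<in>?A. Mvec s s' * (if tamari_le s' (?X R) then 1 else 0)) *
        (\<Sum>t'\<in>?B. Mvec t t' * (if tamari_le t' (?Y R) then 1 else 0)) =
        (if ?C1 R then 1 else 0) * (if s = ?X R then 1 else 0) * (if t = ?Y R then 1 else 0)"
        using mob_delta[OF nX] mob_delta[OF nY] by simp
    qed
    also have "\<dots> = (\<Sum>R\<in>?Rs. if ?C1 R then G R else 0)"
      by (intro sum.cong refl) (auto simp: G_def)
    also have "\<dots> = (\<Sum>R\<in>Pow {1..n}. if ?C1 R then G R else 0)"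
    proof (rule sum.mono_neutral_left)
      show "finite (Pow {1..n})" by simp
      show "?Rs \<subseteq> Pow {1..n}" by (auto simp: Rset_def)
      show "\<forall>R\<in>Pow {1..n} - ?Rs. (if ?C1 R then G R else 0) = 0"
      proof
        fix R assume R: "R \<in> Pow {1..n} - ?Rs"
        then have "card R \<noteq> ?p" "R \<subseteq> {1..n}" by (auto simp: Rset_def)
        then show "(if ?C1 R then G R else 0) = 0" using GR by auto
      qed
    qed
    also have "\<dots> = (\<Sum>R\<in>{R \<in> Pow {1..n}. ?C1 R}. G R)"
      by (rule sum.inter_filter[symmetric]) simp
    also have "{R \<in> Pow {1..n}. ?C1 R} = {R. R \<subseteq> {1..n} \<and> ?C1 R}" by auto
    finally show ?thesis using rhs x by simp
  qed
qed


end
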